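(* Let $\mathcal G$ be a shortest-path game in which $\mathrm{Val}^{\mathrm d}(v)\neq+\infty$ and $\overline{\mathrm{Val}}^{\mathrm m}(v)\neq+\infty$ for all vertices $v$. Let $\sigma_1$ be a fake-optimal NC-strategy of Min, $\sigma_2$ an attractor strategy of Min, $n\in\mathbb N$, and $\sigma=\langle\sigma_1,\sigma_2,\alpha\rangle$ the switching strategy with $\alpha=(2W(|V|-1)+n)|V|+1$. Fix $v_0\in V$. For $p\in(0,1)$ let $\rho_p$ be the memoryless strategy of Min defined below. Then there is $\varepsilon_0>0$ such that for every $\varepsilon\in(0,\varepsilon_0)$ there exists $p_0<1$ such that for every $p\in[p_0,1)$ and every memoryless strategy $\tau$ of Max, $\mathbb E^{\rho_p,\tau}_{v_0}(\mathrm{TP})\le \mathrm{Val}^{\sigma}(v_0)+\varepsilon$.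
   Context: A shortest-path game is $\mathcal G=(V_{\mathrm{Max}},V_{\mathrm{Min}},T,E,w)$ with finite $V=V_{\mathrm{Max}}\uplus V_{\mathrm{Min}}\uplus T$, edges $E\subseteq (V\setminus T)\times V$ with every non-target vertex having a successor, and integer weights $w\colon E\to\mathbb Z$; $W=\max_{e\in E}|w(e)|$. Plays from $v$ are finite paths ending at their first visit to $T$ (total payoff $\mathrm{TP}$ = sum of weights) or infinite paths avoiding $T$ ($\mathrm{TP}=+\infty$). Strategies of Min (resp. Max) map finite paths ending in $V_{\mathrm{Min}}$ (resp. $V_{\mathrm{Max}}$) to distributions on successors of the last vertex; deterministic = always Dirac, memoryless = depends only on the last vertex. For deterministic $\sigma,\tau$, $\mathrm{out}(v,\sigma,\tau)$ is the unique conforming play; $\mathrm{Val}^\sigma(v)=\sup_\tau \mathrm{TP}(\mathrm{out}(v,\sigma,\tau))$ over deterministic $\tau$, and $\mathrm{Val}^{\mathrm d}(v)=\inf_\sigma\mathrm{Val}^\sigma(v)$. For memoryless $\rho$ (Min) and $\tau$ (Max), $\mathbb E^{\rho,\tau}_v(\mathrm{TP})$ is the expected total payoff in the induced Markov chain; $\overline{\mathrm{Val}}^{\mathrm m}(v)=\inf_\rho\sup_\tau\mathbb E^{\rho,\tau}_v(\mathrm{TP})$ over memoryless strategies. A play/path conforms to a memoryless deterministic Min strategy $\sigma_1$ if every Min vertex $u$ on it (except possibly the last) is followed by $\sigma_1(u)$. An NC-strategy is a memoryless deterministic Min strategy $\sigma_1$ such that every cycle conforming to $\sigma_1$ has negative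 total weight; it is fake-optimal if for all $v$, $\sup\{\mathrm{TP}(\pi)\mid \pi \text{ a finite play from } v \text{ ending in } T \text{ conforming to } \sigma_1\}\le \mathrm{Val}^{\mathrm d}(v)$ (with $\sup\emptyset=-\infty$). An attractor strategy is a memoryless deterministic Min strategy $\sigma_2$ guaranteeing that every conforming play reaches $T$. The switching strategy $\langle\sigma_1,\sigma_2,\alpha\rangle$ is the deterministic strategy that plays $\sigma_1$ and switches to $\sigma_2$ as soon as the length of the current finite play exceeds $\alpha$. The strategy $\rho_p$: for $v\in V_{\mathrm{Min}}$, if the strongly connected component of $v$ in the graph $(V,E)$ contains no cycle of negative total weight, $\rho_p(v)$ is the Dirac distribution on $\sigma_1(v)$; otherwise, if $\sigma_1(v)\ne\sigma_2(v)$, $\rho_p(v)$ chooses $\sigma_1(v)$ with probability $p$ and $\sigma_2(v)$ with probability $1-p$, and if $\sigma_1(v)=\sigma_2(v)$ it chooses that vertex with probability 1. *)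

theory Defs
  imports "HOL-Probability.Probability"
begin

record 'v spgame =
  VMax :: "'v set"
  VMin :: "'v set"
  Tgt  :: "'v set"
  Edg  :: "('v \<times> 'v) set"
  wt   :: "'v \<times> 'v \<Rightarrow> int"

definition Vs :: "'v spgame \<Rightarrow> 'v set" where
  "Vs G = VMax G \<union> VMin G \<union> Tgt G"

definition well_formed :: "'v spgame \<Rightarrow> bool" where
  "well_formed G \<longleftrightarrow> finite (Vs G)
     \<and> VMax G \<inter> VMin G = {} \<and> VMax G \<inter> Tgt G = {} \<and> VMin G \<inter> Tgt G = {}
     \<and> Edg G \<subseteq> (Vs G - Tgt G) \<times> Vs G
     \<and> (\<forall>v \<in> Vs G - Tgt G. \<exists>u. (v, u) \<in> Edg G)"

definition maxW :: "'v spgame \<Rightarrow> int" where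
  "maxW G = Max (insert 0 ((\<lambda>e. \<bar>wt G e\<bar>) ` Edg G))"

definition is_path :: "'v spgame \<Rightarrow> 'v list \<Rightarrow> bool" where
  "is_path G xs \<longleftrightarrow> xs \<noteq> [] \<and> set xs \<subseteq> Vs G
     \<and> (\<forall>i. Suc i < length xs \<longrightarrow> (xs ! i, xs ! Suc i) \<in> Edg G)"

definition path_weight :: "'v spgame \<Rightarrow> 'v list \<Rightarrow> int" where
  "path_weight G xs = (\<Sum>i<length xs - 1. wt G (xs ! i, xs ! Suc i))"

definition fin_play :: "'v spgame \<Rightarrow> 'v \<Rightarrow> 'v list \<Rightarrow> bool" where
  "fin_play G v xs \<longleftrightarrow> is_path G xs \<and> hd xs = v \<and> last xs \<in> Tgt G
     \<and> (\<forall>i. Suc i < length xs \<longrightarrow> xs ! i \<notin> Tgt G)"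

definition is_cycle :: "'v spgame \<Rightarrow> 'v list \<Rightarrow> bool" where
  "is_cycle G xs \<longleftrightarrow> is_path G xs \<and> length xs \<ge> 2 \<and> hd xs = last xs"

definition conforms :: "'v spgame \<Rightarrow> ('v \<Rightarrow> 'v) \<Rightarrow> 'v list \<Rightarrow> bool" where
  "conforms G s xs \<longleftrightarrow> (\<forall>i. Suc i < length xs \<longrightarrow> xs ! i \<in> VMin G \<longrightarrow> xs ! Suc i = s (xs ! i))"

definition det_strat_Min :: "'v spgame \<Rightarrow> ('v list \<Rightarrow> 'v) \<Rightarrow> bool" where
  "det_strat_Min G \<sigma> \<longleftrightarrow> (\<forall>h. h \<noteq> [] \<longrightarrow> last h \<in> VMin G \<longrightarrow> (last h, \<sigma> h) \<in> Edg G)"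

definition det_strat_Max :: "'v spgame \<Rightarrow> ('v list \<Rightarrow> 'v) \<Rightarrow> bool" where
  "det_strat_Max G \<tau> \<longleftrightarrow> (\<forall>h. h \<noteq> [] \<longrightarrow> last h \<in> VMax G \<longrightarrow> (last h, \<tau> h) \<in> Edg G)"

text \<open>Prefixes of the outcome out(v,\<sigma>,\<tau>); stutters once T is reached.\<close>
fun out_hist :: "'v spgame \<Rightarrow> 'v \<Rightarrow> ('v list \<Rightarrow> 'v) \<Rightarrow> ('v list \<Rightarrow> 'v) \<Rightarrow> nat \<Rightarrow> 'v list" where
  "out_hist G v \<sigma> \<tau> 0 = [v]"
| "out_hist G v \<sigma> \<tau> (Suc n) =
     (let h = out_hist G v \<sigma> \<tau> n in
      if last h \<in> Tgt G then h
      else h @ [if last h \<in> VMin G then \<sigma> h else \<tau> h])"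

definition TP_out :: "'v spgame \<Rightarrow> 'v \<Rightarrow> ('v list \<Rightarrow> 'v) \<Rightarrow> ('v list \<Rightarrow> 'v) \<Rightarrow> ereal" where
  "TP_out G v \<sigma> \<tau> =
     (if \<exists>n. last (out_hist G v \<sigma> \<tau> n) \<in> Tgt G
      then ereal (real_of_int (path_weight G
             (out_hist G v \<sigma> \<tau> (LEAST n. last (out_hist G v \<sigma> \<tau> n) \<in> Tgt G))))
      else \<infinity>)"

definition Val_strat :: "'v spgame \<Rightarrow> ('v list \<Rightarrow> 'v) \<Rightarrow> 'v \<Rightarrow> ereal" where
  "Val_strat G \<sigma> v = (SUP \<tau> \<in> {\<tau>. det_strat_Max G \<tau>}. TP_out G v \<sigma> \<tau>)"

definition Val_d :: "'v spgame \<Rightarrow> 'v \<Rightarrow> ereal" where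
  "Val_d G v = (INF \<sigma> \<in> {\<sigma>. det_strat_Min G \<sigma>}. Val_strat G \<sigma> v)"

definition ml_strat_Min :: "'v spgame \<Rightarrow> ('v \<Rightarrow> 'v pmf) \<Rightarrow> bool" where
  "ml_strat_Min G \<rho> \<longleftrightarrow> (\<forall>u \<in> VMin G. \<forall>x \<in> set_pmf (\<rho> u). (u, x) \<in> Edg G)"

definition ml_strat_Max :: "'v spgame \<Rightarrow> ('v \<Rightarrow> 'v pmf) \<Rightarrow> bool" where
  "ml_strat_Max G \<tau> \<longleftrightarrow> (\<forall>u \<in> VMax G. \<forall>x \<in> set_pmf (\<tau> u). (u, x) \<in> Edg G)"

definition path_prob :: "'v spgame \<Rightarrow> ('v \<Rightarrow> 'v pmf) \<Rightarrow> ('v \<Rightarrow> 'v pmf) \<Rightarrow> 'v list \<Rightarrow> real" where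
  "path_prob G \<rho> \<tau> xs =
     (\<Prod>i<length xs - 1. pmf (if xs ! i \<in> VMin G then \<rho> (xs ! i) else \<tau> (xs ! i)) (xs ! Suc i))"

text \<open>Expected total payoff in the induced Markov chain: +\<infinity> if T is not reached almost
  surely; otherwise the (absolutely convergent) sum over finite plays.\<close>
definition exp_TP :: "'v spgame \<Rightarrow> ('v \<Rightarrow> 'v pmf) \<Rightarrow> ('v \<Rightarrow> 'v pmf) \<Rightarrow> 'v \<Rightarrow> ereal" where
  "exp_TP G \<rho> \<tau> v =
     (if (\<Sum>\<^sub>\<infinity>xs \<in> {xs. fin_play G v xs}. path_prob G \<rho> \<tau> xs) = 1
      then ereal (\<Sum>\<^sub>\<infinity>xs \<in> {xs. fin_play G v xs}.
                     path_prob G \<rho> \<tau> xs * real_of_int (path_weight G xs))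
      else \<infinity>)"

definition Val_m_bar :: "'v spgame \<Rightarrow> 'v \<Rightarrow> ereal" where
  "Val_m_bar G v = (INF \<rho> \<in> {\<rho>. ml_strat_Min G \<rho>}.
                      SUP \<tau> \<in> {\<tau>. ml_strat_Max G \<tau>}. exp_TP G \<rho> \<tau> v)"

definition md_strat_Min :: "'v spgame \<Rightarrow> ('v \<Rightarrow> 'v) \<Rightarrow> bool" where
  "md_strat_Min G s \<longleftrightarrow> (\<forall>u \<in> VMin G. (u, s u) \<in> Edg G)"

definition NC_strategy :: "'v spgame \<Rightarrow> ('v \<Rightarrow> 'v) \<Rightarrow> bool" where
  "NC_strategy G s \<longleftrightarrow> md_strat_Min G s
     \<and> (\<forall>xs. is_cycle G xs \<longrightarrow> conforms G s xs \<longrightarrow> path_weight G xs < 0)"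

definition fake_optimal :: "'v spgame \<Rightarrow> ('v \<Rightarrow> 'v) \<Rightarrow> bool" where
  "fake_optimal G s \<longleftrightarrow> (\<forall>v \<in> Vs G.
     Sup {ereal (real_of_int (path_weight G xs)) | xs. fin_play G v xs \<and> conforms G s xs} \<le> Val_d G v)"

definition attractor_strategy :: "'v spgame \<Rightarrow> ('v \<Rightarrow> 'v) \<Rightarrow> bool" where
  "attractor_strategy G s \<longleftrightarrow> md_strat_Min G s
     \<and> (\<forall>f :: nat \<Rightarrow> 'v. f 0 \<in> Vs G \<longrightarrow> (\<forall>i. (f i, f (Suc i)) \<in> Edg G)
          \<longrightarrow> (\<forall>i. f i \<in> VMin G \<longrightarrow> f (Suc i) = s (f i)) \<longrightarrow> (\<exists>i. f i \<in> Tgt G))"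

text \<open>Switching strategy: the length of a finite play h is its number of edges, length h - 1.\<close>
definition switching :: "('v \<Rightarrow> 'v) \<Rightarrow> ('v \<Rightarrow> 'v) \<Rightarrow> nat \<Rightarrow> 'v list \<Rightarrow> 'v" where
  "switching s1 s2 \<alpha> h = (if length h - 1 > \<alpha> then s2 (last h) else s1 (last h))"

definition scc :: "'v spgame \<Rightarrow> 'v \<Rightarrow> 'v set" where
  "scc G v = {u. (v, u) \<in> (Edg G)\<^sup>* \<and> (u, v) \<in> (Edg G)\<^sup>*}"

definition scc_has_neg_cycle :: "'v spgame \<Rightarrow> 'v \<Rightarrow> bool" where
  "scc_has_neg_cycle G v \<longleftrightarrow>
     (\<exists>xs. is_cycle G xs \<and> set xs \<subseteq> scc G v \<and> path_weight G xs < 0)"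

definition rho_p :: "'v spgame \<Rightarrow> ('v \<Rightarrow> 'v) \<Rightarrow> ('v \<Rightarrow> 'v) \<Rightarrow> real \<Rightarrow> 'v \<Rightarrow> 'v pmf" where
  "rho_p G s1 s2 p v =
     (if \<not> scc_has_neg_cycle G v then return_pmf (s1 v)
      else if s1 v \<noteq> s2 v then map_pmf (\<lambda>b. if b then s1 v else s2 v) (bernoulli_pmf p)
      else return_pmf (s1 v))"

end

theory Submission
  imports Defs
begin

lemma successively_nth:
  "successively P xs \<longleftrightarrow> (\<forall>i. Suc i < length xs \<longrightarrow> P (xs!i) (xs!Suc i))"
proof (induction P xs rule: successively.induct)
  case (3 P x y xs)
  have "(\<forall>i. Suc i < length (x#y#xs) \<longrightarrow> P ((x#y#xs)!i) ((x#y#xs)!Suc i))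
     \<longleftrightarrow> P x y \<and> (\<forall>i. Suc i < length (y#xs) \<longrightarrow> P ((y#xs)!i) ((y#xs)!Suc i))"
    (is "?L \<longleftrightarrow> ?R")
  proof
    assume ?L
    show ?R
    proof
      show "P x y" using spec[OF \<open>?L\<close>, of 0] by simp
      show "\<forall>i. Suc i < length (y#xs) \<longrightarrow> P ((y#xs)!i) ((y#xs)!Suc i)"
        using \<open>?L\<close> by (metis Suc_less_eq length_Cons nth_Cons_Suc)
    qed
  next
    assume ?R
    show ?L
    proof (intro allI impI)
      fix i assume "Suc i < length (x#y#xs)"
      then show "P ((x#y#xs)!i) ((x#y#xs)!Suc i)" using \<open>?R\<close>
        by (cases i) auto
    qed
  qed
  then show ?case using 3 by simp
qed auto

lemma is_path_alt: "is_path G xs \<longleftrightarrow> xs \<noteq> [] \<and> set xs \<subseteq> Vs G \<and> successively (\<lambda>a b. (a,b) \<in> Edg G) xs"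
  unfolding is_path_def successively_nth by auto

lemma conforms_alt: "conforms G s xs \<longleftrightarrow> successively (\<lambda>a b. a \<in> VMin G \<longrightarrow> b = s a) xs"
  unfolding conforms_def successively_nth by auto

lemma notT_alt: "(\<forall>i. Suc i < length xs \<longrightarrow> xs!i \<notin> A) \<longleftrightarrow> set (butlast xs) \<inter> A = {}"
proof
  assume H: "\<forall>i. Suc i < length xs \<longrightarrow> xs!i \<notin> A"
  show "set (butlast xs) \<inter> A = {}"
  proof (rule ccontr)
    assume "set (butlast xs) \<inter> A \<noteq> {}"
    then obtain x where x: "x \<in> set (butlast xs)" "x \<in> A" by blast
    then obtain i where i: "i < length (butlast xs)" "butlast xs ! i = x" by (auto simp: in_set_conv_nth)
    then have "xs ! i = x" "Suc i < length xs" by (auto simp: nth_butlast)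
    then show False using H x by auto
  qed
next
  assume H: "set (butlast xs) \<inter> A = {}"
  show "\<forall>i. Suc i < length xs \<longrightarrow> xs!i \<notin> A"
  proof (intro allI impI)
    fix i assume "Suc i < length xs"
    then have "i < length (butlast xs)" "butlast xs ! i = xs ! i" by (auto simp: nth_butlast)
    then have "xs ! i \<in> set (butlast xs)" by (metis nth_mem)
    then show "xs ! i \<notin> A" using H by blast
  qed
qed

lemma fin_play_alt: "fin_play G v xs \<longleftrightarrow> is_path G xs \<and> hd xs = v \<and> last xs \<in> Tgt G \<and> set (butlast xs) \<inter> Tgt G = {}"
  unfolding fin_play_def notT_alt by auto

fun pw :: "'v spgame \<Rightarrow> 'v list \<Rightarrow> int" where
  "pw G [] = 0" | "pw G [x] = 0" | "pw G (x#y#xs) = wt G (x,y) + pw G (y#xs)"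

fun pp :: "('v \<Rightarrow> 'v pmf) \<Rightarrow> 'v list \<Rightarrow> real" where
  "pp D [] = 1" | "pp D [x] = 1" | "pp D (x#y#xs) = pmf (D x) y * pp D (y#xs)"

lemma path_weight_pw: "path_weight G xs = pw G xs"
proof (induction G xs rule: pw.induct)
  case (3 G x y xs)
  then show ?case unfolding path_weight_def by (simp add: sum.lessThan_Suc_shift del: sum.lessThan_Suc)
qed (auto simp: path_weight_def)

lemma pp_prod: "(\<Prod>i<length xs - 1. pmf (D (xs!i)) (xs!Suc i)) = pp D xs"
proof (induction D xs rule: pp.induct)
  case (3 D x y xs)
  then show ?case by (simp add: prod.lessThan_Suc_shift del: prod.lessThan_Suc)
qed auto

lemma path_prob_pp: "path_prob G \<rho> \<tau> xs = pp (\<lambda>u. if u \<in> VMin G then \<rho> u else \<tau> u) xs"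
  using pp_prod[of "\<lambda>u. if u \<in> VMin G then \<rho> u else \<tau> u" xs] by (simp add: path_prob_def)

lemma pw_snoc: "xs \<noteq> [] \<Longrightarrow> pw G (xs @ [x]) = pw G xs + wt G (last xs, x)"
proof (induction G xs rule: pw.induct)
  case (2 G y) then show ?case by simp
next
  case (3 G a b xs) then show ?case by simp
qed simp

lemma pp_snoc: "xs \<noteq> [] \<Longrightarrow> pp D (xs @ [x]) = pp D xs * pmf (D (last xs)) x"
proof (induction D xs rule: pp.induct)
  case (3 D a b xs) then show ?case by simp
qed simp_all

lemma pw_split: "pw G (xs @ y # zs) = pw G (xs @ [y]) + pw G (y # zs)"
proof (induction xs)
  case (Cons a xs)
  then show ?case by (cases xs) auto
qed simp

lemma pp_nonneg: "pp D xs \<ge> 0"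
  by (induction D xs rule: pp.induct) auto

lemma pw_bound: "xs \<noteq> [] \<Longrightarrow> (\<forall>i. Suc i < length xs \<longrightarrow> \<bar>wt G (xs!i, xs!Suc i)\<bar> \<le> W) \<Longrightarrow> \<bar>pw G xs\<bar> \<le> W * (int (length xs) - 1)"
proof (induction G xs rule: pw.induct)
  case (3 G x y xs)
  have "\<bar>wt G (x,y)\<bar> \<le> W" using "3.prems"(2)[rule_format, of 0] by simp
  moreover have "\<bar>pw G (y#xs)\<bar> \<le> W * (int (length (y#xs)) - 1)"
    using "3.prems"(2) by (intro "3.IH") (simp, metis Suc_less_eq length_Cons nth_Cons_Suc)
  ultimately show ?case by (simp add: algebra_simps)
qed auto

locale chain =
  fixes G :: "'v spgame" and D :: "'v \<Rightarrow> 'v pmf"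
  assumes wf: "well_formed G"
  and supp: "\<And>u. u \<in> Vs G - Tgt G \<Longrightarrow> set_pmf (D u) \<subseteq> {x. (u,x) \<in> Edg G}"
begin

definition succ :: "'v \<Rightarrow> 'v set" where "succ u = {x. (u,x) \<in> Edg G}"

lemma finV: "finite (Vs G)" using wf by (simp add: well_formed_def)

lemma edge_in: "(u,x) \<in> Edg G \<Longrightarrow> u \<in> Vs G - Tgt G \<and> x \<in> Vs G"
  using wf unfolding well_formed_def by blast

lemma succ_sub: "succ u \<subseteq> Vs G" using edge_in unfolding succ_def by blast

lemma fin_succ: "finite (succ u)" using succ_sub finV finite_subset by blast

lemma sum_succ: "u \<in> Vs G - Tgt G \<Longrightarrow> (\<Sum>x\<in>succ u. pmf (D u) x) = 1"
  using supp[of u] by (intro sum_pmf_eq_1 fin_succ) (auto simp: succ_def)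

lemma pmf_out: "u \<in> Vs G - Tgt G \<Longrightarrow> x \<notin> succ u \<Longrightarrow> pmf (D u) x = 0"
  using supp[of u] by (metis (no_types, lifting) mem_Collect_eq pmf_eq_0_set_pmf subset_eq succ_def)

definition Live :: "'v \<Rightarrow> nat \<Rightarrow> 'v list set" where
  "Live v N = {xs. length xs = Suc N \<and> hd xs = v \<and> is_path G xs \<and> set xs \<inter> Tgt G = {}}"

definition Fin :: "'v \<Rightarrow> nat \<Rightarrow> 'v list set" where
  "Fin v N = {xs. fin_play G v xs \<and> length xs = Suc N}"

lemma finite_Live: "finite (Live v N)"
proof -
  have "Live v N \<subseteq> {xs. set xs \<subseteq> Vs G \<and> length xs = Suc N}"
    unfolding Live_def is_path_def by auto
  then show ?thesis using finite_lists_length_eq[OF finV] finite_subset by blast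
qed

lemma finite_Fin: "finite (Fin v N)"
proof -
  have "Fin v N \<subseteq> {xs. set xs \<subseteq> Vs G \<and> length xs = Suc N}"
    unfolding Fin_def fin_play_def is_path_def by auto
  then show ?thesis using finite_lists_length_eq[OF finV] finite_subset by blast
qed

lemma Live_0: "Live v 0 = (if v \<in> Vs G - Tgt G then {[v]} else {})"
  unfolding Live_def is_path_def by (auto simp: length_Suc_conv)

lemma Fin_0: "Fin v 0 = (if v \<in> Tgt G then {[v]} else {})"
proof -
  have "Tgt G \<subseteq> Vs G" by (simp add: Vs_def)
  then show ?thesis unfolding Fin_def fin_play_def is_path_def by (auto simp: length_Suc_conv)
qed

lemma snoc_Live: "ys @ [x] \<in> Live v (Suc N) \<longleftrightarrow> ys \<in> Live v N \<and> x \<in> succ (last ys) - Tgt G"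
proof (cases "ys = []")
  case True then show ?thesis by (simp add: Live_def)
next
  case False
  then show ?thesis unfolding Live_def is_path_alt succ_def
    using edge_in by (auto simp: successively_append_iff)
qed

lemma snoc_Fin: "ys @ [x] \<in> Fin v (Suc N) \<longleftrightarrow> ys \<in> Live v N \<and> x \<in> succ (last ys) \<inter> Tgt G"
proof (cases "ys = []")
  case True then show ?thesis by (simp add: Live_def Fin_def)
next
  case False
  then show ?thesis unfolding Live_def Fin_def fin_play_alt is_path_alt succ_def
    using edge_in by (auto simp: successively_append_iff)
qed

lemma Live_Suc: "Live v (Suc N) = (\<lambda>(ys,x). ys @ [x]) ` (SIGMA ys:Live v N. succ (last ys) - Tgt G)"
proof
  show "Live v (Suc N) \<subseteq> (\<lambda>(ys,x). ys @ [x]) ` (SIGMA ys:Live v N. succ (last ys) - Tgt G)"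
  proof
    fix xs assume xs: "xs \<in> Live v (Suc N)"
    then have "xs \<noteq> []" by (auto simp: Live_def)
    then obtain ys x where e: "xs = ys @ [x]" by (metis rev_exhaust)
    have "ys \<in> Live v N \<and> x \<in> succ (last ys) - Tgt G" using xs e snoc_Live by simp
    then show "xs \<in> (\<lambda>(ys,x). ys @ [x]) ` (SIGMA ys:Live v N. succ (last ys) - Tgt G)"
      by (intro image_eqI[where x="(ys,x)"]) (auto simp: e)
  qed
qed (auto simp: snoc_Live)

lemma Fin_Suc: "Fin v (Suc N) = (\<lambda>(ys,x). ys @ [x]) ` (SIGMA ys:Live v N. succ (last ys) \<inter> Tgt G)"
proof
  show "Fin v (Suc N) \<subseteq> (\<lambda>(ys,x). ys @ [x]) ` (SIGMA ys:Live v N. succ (last ys) \<inter> Tgt G)"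
  proof
    fix xs assume xs: "xs \<in> Fin v (Suc N)"
    then have "xs \<noteq> []" by (auto simp: Fin_def)
    then obtain ys x where e: "xs = ys @ [x]" by (metis rev_exhaust)
    have "ys \<in> Live v N \<and> x \<in> succ (last ys) \<inter> Tgt G" using xs e snoc_Fin by simp
    then show "xs \<in> (\<lambda>(ys,x). ys @ [x]) ` (SIGMA ys:Live v N. succ (last ys) \<inter> Tgt G)"
      by (intro image_eqI[where x="(ys,x)"]) (auto simp: e)
  qed
qed (auto simp: snoc_Fin)

lemma inj_snoc: "inj_on (\<lambda>(ys,x). ys @ [x]) A"
  by (auto simp: inj_on_def)

lemma sum_Live_Suc:
  "(\<Sum>xs\<in>Live v (Suc N). F xs) = (\<Sum>ys\<in>Live v N. \<Sum>x\<in>succ (last ys) - Tgt G. F (ys @ [x]))"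
  unfolding Live_Suc
  by (subst sum.reindex[OF inj_snoc], subst sum.Sigma) (auto simp: finite_Live fin_succ split_def comp_def)

lemma sum_Fin_Suc:
  "(\<Sum>xs\<in>Fin v (Suc N). F xs) = (\<Sum>ys\<in>Live v N. \<Sum>x\<in>succ (last ys) \<inter> Tgt G. F (ys @ [x]))"
  unfolding Fin_Suc
  by (subst sum.reindex[OF inj_snoc], subst sum.Sigma) (auto simp: finite_Live fin_succ split_def comp_def)

lemma sum_ext:
  "(\<Sum>xs\<in>Live v (Suc N). F xs) + (\<Sum>xs\<in>Fin v (Suc N). F xs) = (\<Sum>ys\<in>Live v N. \<Sum>x\<in>succ (last ys). F (ys @ [x]))"
proof -
  have "(\<Sum>x\<in>succ (last ys). F (ys @ [x])) = (\<Sum>x\<in>succ (last ys) - Tgt G. F (ys @ [x])) + (\<Sum>x\<in>succ (last ys) \<inter> Tgt G. F (ys @ [x]))" for ys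
    by (metis add.commute fin_succ sum.Int_Diff)
  then show ?thesis unfolding sum_Live_Suc sum_Fin_Suc by (simp add: sum.distrib)
qed

lemma Live_last: "ys \<in> Live v N \<Longrightarrow> last ys \<in> Vs G - Tgt G \<and> ys \<noteq> []"
proof -
  assume "ys \<in> Live v N"
  then have "ys \<noteq> []" "set ys \<subseteq> Vs G" "set ys \<inter> Tgt G = {}" unfolding Live_def is_path_def by auto
  then show ?thesis using last_in_set[of ys] by blast
qed

definition mass where "mass A = (\<Sum>xs\<in>A. pp D xs)"

lemma mass_step: "mass (Live v (Suc N)) + mass (Fin v (Suc N)) = mass (Live v N)"
proof -
  have "(\<Sum>x\<in>succ (last ys). pp D (ys @ [x])) = pp D ys" if "ys \<in> Live v N" for ys
  proof -
    have "(\<Sum>x\<in>succ (last ys). pp D (ys @ [x])) = pp D ys * (\<Sum>x\<in>succ (last ys). pmf (D (last ys)) x)"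
      using Live_last[OF that] by (simp add: pp_snoc sum_distrib_left)
    then show ?thesis using sum_succ Live_last[OF that] by simp
  qed
  then show ?thesis unfolding mass_def sum_ext by simp
qed

lemma drift_step:
  fixes \<phi> :: "'v \<Rightarrow> real"
  assumes drift: "\<And>u. u \<in> Vs G - Tgt G \<Longrightarrow> (\<Sum>x\<in>succ u. pmf (D u) x * (real_of_int (wt G (u,x)) + \<phi> x)) \<le> \<phi> u"
  defines "val \<equiv> \<lambda>xs. pp D xs * (real_of_int (pw G xs) + \<phi> (last xs))"
  shows "(\<Sum>xs\<in>Live v (Suc N). val xs) + (\<Sum>xs\<in>Fin v (Suc N). val xs) \<le> (\<Sum>xs\<in>Live v N. val xs)"
proof -
  have "(\<Sum>x\<in>succ (last ys). val (ys @ [x])) \<le> val ys" if "ys \<in> Live v N" for ys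
  proof -
    let ?u = "last ys"
    have u: "?u \<in> Vs G - Tgt G" "ys \<noteq> []" using Live_last[OF that] by auto
    have "(\<Sum>x\<in>succ ?u. val (ys @ [x])) = pp D ys * (real_of_int (pw G ys) * (\<Sum>x\<in>succ ?u. pmf (D ?u) x)
        + (\<Sum>x\<in>succ ?u. pmf (D ?u) x * (real_of_int (wt G (?u,x)) + \<phi> x)))"
      using u by (simp add: val_def pp_snoc pw_snoc sum_distrib_left sum_distrib_right sum.distrib algebra_simps)
    also have "\<dots> \<le> pp D ys * (real_of_int (pw G ys) + \<phi> ?u)"
      using sum_succ[OF u(1)] drift[OF u(1)] pp_nonneg by (intro mult_left_mono) auto
    finally show ?thesis by (simp add: val_def)
  qed
  then show ?thesis unfolding sum_ext by (intro sum_mono) auto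
qed

definition K :: "('v \<Rightarrow> real) \<Rightarrow> 'v \<Rightarrow> real" where
  "K g u = (\<Sum>x\<in>succ u - Tgt G. pmf (D u) x * g x)"

lemma Live_K: "(\<Sum>xs\<in>Live v (Suc N). pp D xs * g (last xs)) = (\<Sum>ys\<in>Live v N. pp D ys * K g (last ys))"
  unfolding sum_Live_Suc K_def
  by (intro sum.cong refl) (auto simp: pp_snoc sum_distrib_left Live_last mult.assoc)

lemma Live_Kpow: "v \<in> Vs G - Tgt G \<Longrightarrow> (\<Sum>xs\<in>Live v N. pp D xs * g (last xs)) = (K ^^ N) g v"
proof (induction N arbitrary: g)
  case 0 then show ?case by (simp add: Live_0)
next
  case (Suc N)
  then show ?case by (simp add: Live_K funpow_Suc_right del: funpow.simps)
qed

end

context chain begin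

lemma K_mono: "(\<And>x. x \<in> Vs G - Tgt G \<Longrightarrow> g x \<le> h x) \<Longrightarrow> K g u \<le> K h u"
  unfolding K_def using succ_sub by (intro sum_mono mult_left_mono) auto

lemma K_scale: "K (\<lambda>x. c * g x) = (\<lambda>u. c * K g u)"
  unfolding K_def by (auto simp: sum_distrib_left algebra_simps)

lemma K_nonneg: "(\<And>x. x \<in> Vs G - Tgt G \<Longrightarrow> 0 \<le> g x) \<Longrightarrow> 0 \<le> K g u"
  unfolding K_def using succ_sub by (intro sum_nonneg mult_nonneg_nonneg) auto

lemma K_one_le: "u \<in> Vs G - Tgt G \<Longrightarrow> K (\<lambda>_. 1) u \<le> 1"
proof -
  assume u: "u \<in> Vs G - Tgt G"
  have "K (\<lambda>_. 1) u = (\<Sum>x\<in>succ u - Tgt G. pmf (D u) x)" by (simp add: K_def)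
  also have "\<dots> \<le> (\<Sum>x\<in>succ u. pmf (D u) x)" by (intro sum_mono2 fin_succ) auto
  finally show ?thesis using sum_succ[OF u] by simp
qed

lemma Kpow_mono: "(\<And>x. x \<in> Vs G - Tgt G \<Longrightarrow> g x \<le> h x) \<Longrightarrow> x \<in> Vs G - Tgt G \<Longrightarrow> (K ^^ n) g x \<le> (K ^^ n) h x"
proof (induction n arbitrary: x)
  case (Suc n)
  have "\<And>y. y \<in> Vs G - Tgt G \<Longrightarrow> (K ^^ n) g y \<le> (K ^^ n) h y" using Suc.IH Suc.prems(1) by blast
  then show ?case by (simp only: funpow.simps comp_def K_mono)
qed simp

lemma Kpow_scale: "(K ^^ n) (\<lambda>x. c * g x) = (\<lambda>u. c * (K ^^ n) g u)"
  by (induction n) (simp_all add: K_scale)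

lemma Kpow_nonneg: "(\<And>x. x \<in> Vs G - Tgt G \<Longrightarrow> 0 \<le> g x) \<Longrightarrow> x \<in> Vs G - Tgt G \<Longrightarrow> 0 \<le> (K ^^ n) g x"
proof (induction n arbitrary: x)
  case (Suc n)
  have "\<And>y. y \<in> Vs G - Tgt G \<Longrightarrow> 0 \<le> (K ^^ n) g y" using Suc.IH Suc.prems(1) by blast
  then show ?case by (simp only: funpow.simps comp_def K_nonneg)
qed simp

lemma Kpow_dec: assumes "x \<in> Vs G - Tgt G" shows "(K ^^ Suc n) (\<lambda>_. 1) x \<le> (K ^^ n) (\<lambda>_. 1) x"
proof -
  have "(K ^^ Suc n) (\<lambda>_. 1) x = (K ^^ n) (K (\<lambda>_. 1)) x" by (simp only: funpow_Suc_right comp_def)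
  also have "\<dots> \<le> (K ^^ n) (\<lambda>_. 1) x" by (rule Kpow_mono[OF K_one_le]) (use assms in auto)
  finally show ?thesis .
qed

lemma Kpow_antimono: "n \<le> m \<Longrightarrow> x \<in> Vs G - Tgt G \<Longrightarrow> (K ^^ m) (\<lambda>_. 1) x \<le> (K ^^ n) (\<lambda>_. 1) x"
proof (induction m)
  case (Suc m)
  show ?case
  proof (cases "n = Suc m")
    case False
    then have "n \<le> m" using Suc.prems(1) by simp
    then have "(K ^^ m) (\<lambda>_. 1) x \<le> (K ^^ n) (\<lambda>_. 1) x" using Suc.IH Suc.prems(2) by blast
    moreover have "(K ^^ Suc m) (\<lambda>_. 1) x \<le> (K ^^ m) (\<lambda>_. 1) x" using Kpow_dec Suc.prems(2) by blast
    ultimately show ?thesis by linarith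
  qed simp
qed simp

lemma Kpow_le1: "x \<in> Vs G - Tgt G \<Longrightarrow> (K ^^ n) (\<lambda>_. 1) x \<le> 1"
  using Kpow_antimono[of 0 n x] by simp

lemma mass_Live: "v \<in> Vs G - Tgt G \<Longrightarrow> mass (Live v N) = (K ^^ N) (\<lambda>_. 1) v"
  unfolding mass_def using Live_Kpow[where g="\<lambda>_. 1"] by simp

lemma Live_empty: "v \<notin> Vs G - Tgt G \<Longrightarrow> Live v N = {}"
proof -
  assume v: "v \<notin> Vs G - Tgt G"
  have False if "xs \<in> Live v N" for xs
  proof -
    have "xs \<noteq> []" "hd xs = v" "set xs \<subseteq> Vs G" "set xs \<inter> Tgt G = {}"
      using that unfolding Live_def is_path_def by auto
    then show False using hd_in_set[of xs] v by blast
  qed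
  then show ?thesis by blast
qed

lemma mass_nonneg: "0 \<le> mass A" unfolding mass_def by (intro sum_nonneg pp_nonneg)

end

locale chain_term = chain +
  assumes terminates: "\<And>u. u \<in> Vs G - Tgt G \<Longrightarrow> \<exists>k. (K ^^ k) (\<lambda>_. 1) u < 1"
begin

lemma uniform_decay: "\<exists>m c. 0 < m \<and> 0 < c \<and> c < 1 \<and> (\<forall>u\<in>Vs G - Tgt G. (K ^^ m) (\<lambda>_. 1) u \<le> c)"
proof -
  define S where "S = Vs G - Tgt G"
  have finS: "finite S" using finV by (simp add: S_def)
  obtain k where k: "\<And>u. u \<in> S \<Longrightarrow> (K ^^ k u) (\<lambda>_. 1) u < 1"
    using terminates unfolding S_def by metis
  define m where "m = Suc (Max (insert 0 (k ` S)))"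
  have km: "u \<in> S \<Longrightarrow> k u \<le> m" for u unfolding m_def using finS
    by (simp add: le_SucI)
  have lt: "u \<in> S \<Longrightarrow> (K ^^ m) (\<lambda>_. 1) u < 1" for u
  proof -
    assume u: "u \<in> S"
    have "k u \<le> m" using km u .
    from Kpow_antimono[OF this, of u] k[OF u] u show ?thesis by (auto simp: S_def)
  qed
  define c where "c = max (1/2) (Max (insert 0 ((\<lambda>u. (K ^^ m) (\<lambda>_. 1) u) ` S)))"
  have "c < 1"
  proof -
    have "Max (insert 0 ((\<lambda>u. (K ^^ m) (\<lambda>_. 1) u) ` S)) < 1"
      using finS lt by (subst Max_less_iff) auto
    then show ?thesis by (simp add: c_def)
  qed
  moreover have "u \<in> S \<Longrightarrow> (K ^^ m) (\<lambda>_. 1) u \<le> c" for u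
    unfolding c_def using finS by (intro max.coboundedI2 Max_ge) auto
  moreover have "0 < c" by (simp add: c_def)
  ultimately show ?thesis unfolding S_def m_def by blast
qed

lemma geometric_decay: "\<exists>C r. 0 \<le> C \<and> 0 \<le> r \<and> r < 1 \<and> (\<forall>v N. mass (Live v N) \<le> C * r ^ N)"
proof -
  obtain m c where mc: "0 < m" "0 < c" "c < 1" "\<And>u. u \<in> Vs G - Tgt G \<Longrightarrow> (K ^^ m) (\<lambda>_. 1) u \<le> c"
    using uniform_decay by blast
  have pw: "u \<in> Vs G - Tgt G \<Longrightarrow> (K ^^ (a * m)) (\<lambda>_. 1) u \<le> c ^ a" for a u
  proof (induction a arbitrary: u)
    case 0 then show ?case by simp
  next
    case (Suc a)
    have e: "Suc a * m = a * m + m" by simp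
    have "(K ^^ (Suc a * m)) (\<lambda>_. 1) u = (K ^^ (a * m)) ((K ^^ m) (\<lambda>_. 1)) u"
      by (simp only: e funpow_add comp_def)
    also have "\<dots> \<le> (K ^^ (a * m)) (\<lambda>x. c * 1) u"
      using Suc.prems mc(4) by (intro Kpow_mono) auto
    also have "\<dots> = c * (K ^^ (a * m)) (\<lambda>_. 1) u" by (simp only: Kpow_scale)
    also have "\<dots> \<le> c * c ^ a" using Suc mc by (intro mult_left_mono) auto
    finally show ?case by simp
  qed
  define r where "r = root m c"
  have r: "0 < r" "r < 1" "r ^ m = c" using mc by (auto simp: r_def real_root_gt_zero)
  have main: "mass (Live v N) \<le> (1/c) * r ^ N" for v N
  proof (cases "v \<in> Vs G - Tgt G")
    case False then show ?thesis using Live_empty[OF False] r mc by (simp add: mass_def)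
  next
    case True
    have "mass (Live v N) = (K ^^ N) (\<lambda>_. 1) v" using mass_Live[OF True] .
    also have "\<dots> \<le> (K ^^ (N div m * m)) (\<lambda>_. 1) v"
      using True by (intro Kpow_antimono) auto
    also have "\<dots> \<le> c ^ (N div m)" using pw True by blast
    also have "\<dots> = r ^ (m * (N div m))" using r by (simp add: power_mult)
    also have "\<dots> \<le> (1/c) * r ^ N"
    proof -
      have h1: "m * (N div m) + N mod m = N" by (rule mult_div_mod_eq)
      have h2: "N mod m < m" using mc(1) by simp
      have "N \<le> m * (N div m) + m" using h1 h2 by linarith
      then have "r ^ (m * (N div m) + m) \<le> r ^ N" using r by (intro power_decreasing) auto
      then have "r ^ (m * (N div m)) * c \<le> r ^ N" using r by (simp add: power_add)
      then show ?thesis using mc by (simp add: field_simps)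
    qed
    finally show ?thesis .
  qed
  have c0: "0 \<le> 1/c" using mc by simp
  have r0: "0 \<le> r" using r by simp
  show ?thesis
    by (rule exI[where x="1/c"], rule exI[where x=r], intro conjI allI c0 r0 r(2) main)
qed

end

context chain begin

lemma wt_bound: "e \<in> Edg G \<Longrightarrow> \<bar>wt G e\<bar> \<le> maxW G"
proof -
  assume e: "e \<in> Edg G"
  have "Edg G \<subseteq> Vs G \<times> Vs G" using wf unfolding well_formed_def by blast
  then have "finite (Edg G)" using finV finite_subset by blast
  then show ?thesis unfolding maxW_def using e by (intro Max_ge) auto
qed

lemma maxW_nonneg: "0 \<le> maxW G"
proof -
  have "Edg G \<subseteq> Vs G \<times> Vs G" using wf unfolding well_formed_def by blast
  then have "finite (Edg G)" using finV finite_subset by blast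
  then show ?thesis unfolding maxW_def by (intro Max_ge) auto
qed

lemma pw_path_bound: "is_path G xs \<Longrightarrow> \<bar>real_of_int (pw G xs)\<bar> \<le> real_of_int (maxW G) * (real (length xs) - 1)"
proof -
  assume p: "is_path G xs"
  then have "xs \<noteq> []" "\<forall>i. Suc i < length xs \<longrightarrow> (xs!i, xs!Suc i) \<in> Edg G" by (auto simp: is_path_def)
  then have "\<bar>pw G xs\<bar> \<le> maxW G * (int (length xs) - 1)"
    using wt_bound by (intro pw_bound) auto
  then have "real_of_int \<bar>pw G xs\<bar> \<le> real_of_int (maxW G * (int (length xs) - 1))" by linarith
  then show ?thesis by simp
qed

definition Fp :: "'v \<Rightarrow> 'v list set" where "Fp v = {xs. fin_play G v xs}"
definition AA :: "'v \<Rightarrow> nat \<Rightarrow> 'v list set" where "AA v N = (\<Union>k\<in>{..N}. Fin v k)"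

lemma Fp_Fin: "xs \<in> Fp v \<Longrightarrow> xs \<in> Fin v (length xs - 1)"
  unfolding Fp_def Fin_def fin_play_def is_path_def by auto

lemma finite_AA: "finite (AA v N)" unfolding AA_def using finite_Fin by blast

lemma AA_sub: "AA v N \<subseteq> Fp v" unfolding AA_def Fp_def Fin_def by auto

lemma AA_mono: "N \<le> M \<Longrightarrow> AA v N \<subseteq> AA v M" unfolding AA_def by (intro UN_mono) auto

lemma AA_exhaust: "finite X \<Longrightarrow> X \<subseteq> Fp v \<Longrightarrow> X \<subseteq> AA v (Max (insert 0 ((\<lambda>xs. length xs - 1) ` X)))"
proof
  fix xs assume X: "finite X" "X \<subseteq> Fp v" and xs: "xs \<in> X"
  have "length xs - 1 \<le> Max (insert 0 ((\<lambda>xs. length xs - 1) ` X))" using X xs by (intro Max_ge) auto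
  then have "length xs - 1 \<in> {..Max (insert 0 ((\<lambda>xs. length xs - 1) ` X))}" by simp
  moreover have "xs \<in> Fin v (length xs - 1)" using Fp_Fin X xs by blast
  ultimately show "xs \<in> AA v (Max (insert 0 ((\<lambda>xs. length xs - 1) ` X)))"
    unfolding AA_def by blast
qed

lemma AA_filterlim: "filterlim (AA v) (finite_subsets_at_top (Fp v)) sequentially"
  unfolding filterlim_finite_subsets_at_top
proof (intro allI impI)
  fix X assume X: "finite X \<and> X \<subseteq> Fp v"
  define N0 where "N0 = Max (insert 0 ((\<lambda>xs. length xs - 1) ` X))"
  have "X \<subseteq> AA v N0" using AA_exhaust X unfolding N0_def by blast
  then show "\<forall>\<^sub>F N in sequentially. finite (AA v N) \<and> X \<subseteq> AA v N \<and> AA v N \<subseteq> Fp v"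
    using AA_mono finite_AA AA_sub by (intro eventually_sequentiallyI[of N0]) blast
qed

lemma sum_AA: "sum f (AA v N) = (\<Sum>k\<le>N. sum f (Fin v k))"
  unfolding AA_def
proof (rule sum.UNION_disjoint)
  show "finite {..N}" by simp
  show "\<forall>i\<in>{..N}. finite (Fin v i)" using finite_Fin by blast
  show "\<forall>i\<in>{..N}. \<forall>j\<in>{..N}. i \<noteq> j \<longrightarrow> Fin v i \<inter> Fin v j = {}" by (auto simp: Fin_def)
qed

lemma tendsto_AA: "f summable_on Fp v \<Longrightarrow> (\<lambda>N. sum f (AA v N)) \<longlonglongrightarrow> infsum f (Fp v)"
  using filterlim_compose[OF infsum_tendsto AA_filterlim] .

lemma mass_total: "v \<in> Vs G \<Longrightarrow> (\<Sum>k\<le>N. mass (Fin v k)) + mass (Live v N) = 1"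
proof (induction N)
  case 0 then show ?case by (auto simp: Fin_0 Live_0 mass_def)
next
  case (Suc N)
  then show ?case using mass_step[of v N] by simp
qed

lemma telescope: "(\<Sum>k\<le>N. real k * mass (Fin v k)) + real N * mass (Live v N) = (\<Sum>j<N. mass (Live v j))"
proof (induction N)
  case 0 then show ?case by simp
next
  case (Suc N)
  have e: "mass (Fin v (Suc N)) + mass (Live v (Suc N)) = mass (Live v N)" using mass_step[of v N] by simp
  have "real N * mass (Fin v (Suc N)) + real N * mass (Live v (Suc N)) = real N * mass (Live v N)"
    using e by (metis distrib_left)
  then show ?case using Suc e by (simp add: algebra_simps)
qed

end

context chain_term begin

lemma abs_bound:
  obtains B where "\<And>v N. (\<Sum>xs\<in>AA v N. \<bar>pp D xs * real_of_int (pw G xs)\<bar>) \<le> B"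
proof -
  obtain C r where Cr: "0 \<le> C" "0 \<le> r" "r < 1" "\<And>v N. mass (Live v N) \<le> C * r ^ N"
    using geometric_decay by blast
  define Wr where "Wr = real_of_int (maxW G)"
  have Wr: "0 \<le> Wr" using maxW_nonneg by (simp add: Wr_def)
  have "(\<Sum>xs\<in>AA v N. \<bar>pp D xs * real_of_int (pw G xs)\<bar>) \<le> Wr * (C / (1 - r))" for v N
  proof -
    have fk: "(\<Sum>xs\<in>Fin v k. \<bar>pp D xs * real_of_int (pw G xs)\<bar>) \<le> Wr * (real k * mass (Fin v k))" for k
    proof -
      have "\<bar>pp D xs * real_of_int (pw G xs)\<bar> \<le> Wr * real k * pp D xs" if "xs \<in> Fin v k" for xs
      proof -
        have p: "is_path G xs" "length xs = Suc k" using that by (auto simp: Fin_def fin_play_def)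
        have "\<bar>real_of_int (pw G xs)\<bar> \<le> Wr * real k" using pw_path_bound[OF p(1)] p(2) by (simp add: Wr_def)
        then have "pp D xs * \<bar>real_of_int (pw G xs)\<bar> \<le> pp D xs * (Wr * real k)"
          using pp_nonneg[of D xs] by (intro mult_left_mono) auto
        then show ?thesis using pp_nonneg[of D xs] by (simp add: abs_mult algebra_simps)
      qed
      then have "(\<Sum>xs\<in>Fin v k. \<bar>pp D xs * real_of_int (pw G xs)\<bar>) \<le> (\<Sum>xs\<in>Fin v k. Wr * real k * pp D xs)"
        by (intro sum_mono) auto
      then show ?thesis by (simp add: mass_def sum_distrib_left mult.assoc)
    qed
    have "(\<Sum>xs\<in>AA v N. \<bar>pp D xs * real_of_int (pw G xs)\<bar>) \<le> (\<Sum>k\<le>N. Wr * (real k * mass (Fin v k)))"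
      unfolding sum_AA by (intro sum_mono fk)
    also have "\<dots> = Wr * (\<Sum>k\<le>N. real k * mass (Fin v k))" by (simp add: sum_distrib_left)
    also have "\<dots> \<le> Wr * (\<Sum>j<N. mass (Live v j))"
    proof -
      have "0 \<le> real N * mass (Live v N)" by (simp add: mass_nonneg)
      then have "(\<Sum>k\<le>N. real k * mass (Fin v k)) \<le> (\<Sum>j<N. mass (Live v j))"
        using telescope[where N=N and v=v] by linarith
      then show ?thesis using Wr by (intro mult_left_mono) auto
    qed
    also have "\<dots> \<le> Wr * (\<Sum>j<N. C * r ^ j)" using Cr Wr by (intro mult_left_mono sum_mono) auto
    also have "\<dots> \<le> Wr * (C / (1 - r))"
    proof -
      have "(\<Sum>j<N. r ^ j) = (1 - r ^ N) / (1 - r)" using Cr by (simp add: sum_gp_strict)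
      also have "\<dots> \<le> 1 / (1 - r)" using Cr by (intro divide_right_mono) auto
      finally have "C * (\<Sum>j<N. r ^ j) \<le> C * (1 / (1 - r))" using Cr by (intro mult_left_mono) auto
      then have "(\<Sum>j<N. C * r ^ j) \<le> C / (1 - r)" by (simp add: sum_distrib_left[symmetric])
      then show ?thesis using Wr by (intro mult_left_mono) auto
    qed
    finally show ?thesis .
  qed
  then show ?thesis using that by blast
qed

lemma summable_w: "(\<lambda>xs. pp D xs * real_of_int (pw G xs)) summable_on Fp v"
proof -
  obtain B where B: "\<And>v N. (\<Sum>xs\<in>AA v N. \<bar>pp D xs * real_of_int (pw G xs)\<bar>) \<le> B"
    using abs_bound by blast
  have "bdd_above ((\<lambda>F. \<Sum>xs\<in>F. norm (pp D xs * real_of_int (pw G xs))) ` {F. F \<subseteq> Fp v \<and> finite F})"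
  proof (rule bdd_aboveI2)
    fix F assume F: "F \<in> {F. F \<subseteq> Fp v \<and> finite F}"
    then obtain N where "F \<subseteq> AA v N" using AA_exhaust by blast
    then have "(\<Sum>xs\<in>F. norm (pp D xs * real_of_int (pw G xs))) \<le> (\<Sum>xs\<in>AA v N. \<bar>pp D xs * real_of_int (pw G xs)\<bar>)"
      unfolding real_norm_def by (rule sum_mono2[OF finite_AA]) auto
    then show "(\<Sum>xs\<in>F. norm (pp D xs * real_of_int (pw G xs))) \<le> B" using B[of v N] by linarith
  qed
  then have "(\<lambda>xs. norm (pp D xs * real_of_int (pw G xs))) summable_on Fp v"
    by (rule abs_summable_iff_bdd_above[THEN iffD2])
  then show ?thesis by (rule summable_on_iff_abs_summable_on_real[THEN iffD2])
qed

lemma summable_p: "v \<in> Vs G \<Longrightarrow> pp D summable_on Fp v"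
proof -
  assume v: "v \<in> Vs G"
  have "bdd_above (sum (pp D) ` {F. F \<subseteq> Fp v \<and> finite F})"
  proof (rule bdd_aboveI2)
    fix F assume F: "F \<in> {F. F \<subseteq> Fp v \<and> finite F}"
    then obtain N where "F \<subseteq> AA v N" using AA_exhaust by blast
    then have "sum (pp D) F \<le> sum (pp D) (AA v N)"
      by (intro sum_mono2 finite_AA) (auto simp: pp_nonneg)
    also have "\<dots> = (\<Sum>k\<le>N. mass (Fin v k))" by (simp add: sum_AA mass_def)
    also have "\<dots> \<le> 1" using mass_total[OF v, of N] mass_nonneg[of "Live v N"] by linarith
    finally show "sum (pp D) F \<le> 1" .
  qed
  then show ?thesis by (intro nonneg_bdd_above_summable_on) (auto simp: pp_nonneg)
qed

theorem chain_main:
  assumes v: "v \<in> Vs G"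
    and \<phi>0: "\<And>x. x \<in> Tgt G \<Longrightarrow> \<phi> x = 0"
    and \<phi>b: "\<And>x. x \<in> Vs G \<Longrightarrow> \<bar>\<phi> x\<bar> \<le> PhiB"
    and drift: "\<And>u. u \<in> Vs G - Tgt G \<Longrightarrow> (\<Sum>x\<in>succ u. pmf (D u) x * (real_of_int (wt G (u,x)) + \<phi> x)) \<le> \<phi> u"
  shows "infsum (pp D) (Fp v) = 1"
    and "infsum (\<lambda>xs. pp D xs * real_of_int (pw G xs)) (Fp v) \<le> \<phi> v"
proof -
  obtain C r where Cr: "0 \<le> C" "0 \<le> r" "r < 1" "\<And>v N. mass (Live v N) \<le> C * r ^ N"
    using geometric_decay by blast
  have L0: "(\<lambda>N. mass (Live v N)) \<longlonglongrightarrow> 0"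
  proof (rule real_tendsto_sandwich[of "\<lambda>_. 0" _ _ "\<lambda>N. C * r ^ N"])
    show "(\<lambda>N. C * r ^ N) \<longlonglongrightarrow> 0" using Cr by (intro tendsto_mult_right_zero LIMSEQ_power_zero) auto
  qed (auto simp: mass_nonneg Cr(4))
  have NL0: "(\<lambda>N. real N * mass (Live v N)) \<longlonglongrightarrow> 0"
  proof (rule real_tendsto_sandwich[of "\<lambda>_. 0" _ _ "\<lambda>N. C * (real N * r ^ N)"])
    show "(\<lambda>N. C * (real N * r ^ N)) \<longlonglongrightarrow> 0" using Cr
      by (intro tendsto_mult_right_zero powser_times_n_limit_0) auto
    show "\<forall>\<^sub>F N in sequentially. real N * mass (Live v N) \<le> C * (real N * r ^ N)"
    proof (intro always_eventually allI)
      fix N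
      have "real N * mass (Live v N) \<le> real N * (C * r ^ N)" using Cr(4) by (intro mult_left_mono) auto
      then show "real N * mass (Live v N) \<le> C * (real N * r ^ N)" by (simp add: algebra_simps)
    qed
  qed (auto simp: mass_nonneg)
  have "(\<lambda>N. sum (pp D) (AA v N)) \<longlonglongrightarrow> infsum (pp D) (Fp v)" by (rule tendsto_AA[OF summable_p[OF v]])
  moreover have "(\<lambda>N. sum (pp D) (AA v N)) = (\<lambda>N. 1 - mass (Live v N))"
    using mass_total[OF v] by (auto simp: sum_AA mass_def algebra_simps)
  moreover have "(\<lambda>N. 1 - mass (Live v N)) \<longlonglongrightarrow> 1 - 0" by (intro tendsto_diff tendsto_const L0)
  ultimately show "infsum (pp D) (Fp v) = 1" using LIMSEQ_unique by fastforce
  define val where "val = (\<lambda>xs. pp D xs * (real_of_int (pw G xs) + \<phi> (last xs)))"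
  define f where "f = (\<lambda>xs. pp D xs * real_of_int (pw G xs))"
  have iter: "(\<Sum>xs\<in>Live v N. val xs) + (\<Sum>k\<le>N. \<Sum>xs\<in>Fin v k. val xs) \<le> \<phi> v" for N
  proof (induction N)
    case 0 then show ?case using v by (auto simp: Live_0 Fin_0 val_def)
  next
    case (Suc N)
    then show ?case using drift_step[OF drift, of v N] by (simp add: val_def)
  qed
  have finv: "xs \<in> Fin v k \<Longrightarrow> val xs = f xs" for xs k
    using \<phi>0 by (auto simp: val_def f_def Fin_def fin_play_def)
  define Wr where "Wr = real_of_int (maxW G)"
  have liv: "- (mass (Live v N) * (Wr * real N + PhiB)) \<le> (\<Sum>xs\<in>Live v N. val xs)" for N
  proof -
    have "- (pp D xs * (Wr * real N + PhiB)) \<le> val xs" if "xs \<in> Live v N" for xs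
    proof -
      have p: "is_path G xs" "length xs = Suc N" using that by (auto simp: Live_def)
      have "\<bar>real_of_int (pw G xs)\<bar> \<le> Wr * real N" using pw_path_bound[OF p(1)] p(2) by (simp add: Wr_def)
      moreover have "\<bar>\<phi> (last xs)\<bar> \<le> PhiB" using \<phi>b Live_last[OF that] by auto
      ultimately have "- (Wr * real N + PhiB) \<le> real_of_int (pw G xs) + \<phi> (last xs)" by linarith
      then show ?thesis unfolding val_def using pp_nonneg[of D xs]
        by (metis minus_mult_right mult_left_mono)
    qed
    then have "(\<Sum>xs\<in>Live v N. - (pp D xs * (Wr * real N + PhiB))) \<le> (\<Sum>xs\<in>Live v N. val xs)"
      by (intro sum_mono) auto
    then show ?thesis by (simp add: mass_def sum_distrib_right sum_negf)
  qed
  have bnd: "sum f (AA v N) \<le> \<phi> v + (Wr * (real N * mass (Live v N)) + PhiB * mass (Live v N))" for N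
  proof -
    have "sum f (AA v N) = (\<Sum>k\<le>N. \<Sum>xs\<in>Fin v k. val xs)" unfolding sum_AA using finv by simp
    then show ?thesis using iter[of N] liv[of N] by (simp add: algebra_simps)
  qed
  have "(\<lambda>N. \<phi> v + (Wr * (real N * mass (Live v N)) + PhiB * mass (Live v N))) \<longlonglongrightarrow> \<phi> v + (Wr * 0 + PhiB * 0)"
    by (intro tendsto_add tendsto_const tendsto_mult NL0 L0)
  then have "(\<lambda>N. \<phi> v + (Wr * (real N * mass (Live v N)) + PhiB * mass (Live v N))) \<longlonglongrightarrow> \<phi> v" by simp
  moreover have "(\<lambda>N. sum f (AA v N)) \<longlonglongrightarrow> infsum f (Fp v)" unfolding f_def by (rule tendsto_AA[OF summable_w])
  ultimately show "infsum (\<lambda>xs. pp D xs * real_of_int (pw G xs)) (Fp v) \<le> \<phi> v"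
    unfolding f_def[symmetric] using bnd by (intro LIMSEQ_le) auto
qed

end

context chain begin

lemma stuck_closed:
  assumes u: "u \<in> Vs G - Tgt G" and nt: "\<forall>k. \<not> (K ^^ k) (\<lambda>_. 1) u < 1" and x: "x \<in> set_pmf (D u)"
  shows "x \<in> Vs G - Tgt G \<and> (\<forall>k. \<not> (K ^^ k) (\<lambda>_. 1) x < 1)"
proof -
  have xs: "x \<in> succ u" using supp[OF u] x by (auto simp: succ_def)
  have px: "0 < pmf (D u) x" using x by (simp add: pmf_positive)
  have key: "(\<lambda>y. if y \<in> Tgt G then 0 else (K ^^ k) (\<lambda>_. 1) y) x = 1" for k
  proof -
    define g where "g = (K ^^ k) (\<lambda>_. 1)"
    define h where "h = (\<lambda>y. if y \<in> Tgt G then 0 else g y)"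
    have hle: "y \<in> succ u \<Longrightarrow> h y \<le> 1" for y
      using succ_sub Kpow_le1 by (auto simp: h_def g_def)
    have "(K ^^ Suc k) (\<lambda>_. 1) u = K g u" by (simp add: g_def)
    also have "\<dots> = (\<Sum>y\<in>succ u. pmf (D u) y * h y)"
    proof -
      have "succ u - Tgt G = {y\<in>succ u. y \<notin> Tgt G}" by auto
      then show ?thesis unfolding K_def h_def using fin_succ
        by (simp add: sum.inter_filter) (intro sum.cong refl, auto)
    qed
    finally have "1 \<le> (\<Sum>y\<in>succ u. pmf (D u) y * h y)" using nt by (metis not_less)
    then have "(\<Sum>y\<in>succ u. pmf (D u) y * (1 - h y)) \<le> 0"
      using sum_succ[OF u] by (simp add: algebra_simps sum_subtractf)
    moreover have nn: "\<forall>y\<in>succ u. 0 \<le> pmf (D u) y * (1 - h y)" using hle by simp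
    moreover have "0 \<le> (\<Sum>y\<in>succ u. pmf (D u) y * (1 - h y))" by (rule sum_nonneg) (use nn in auto)
    ultimately have s0: "(\<Sum>y\<in>succ u. pmf (D u) y * (1 - h y)) = 0" by linarith
    have "(\<Sum>y\<in>succ u. pmf (D u) y * (1 - h y)) = 0 \<longleftrightarrow> (\<forall>y\<in>succ u. pmf (D u) y * (1 - h y) = 0)"
      by (rule sum_nonneg_eq_0_iff[OF fin_succ]) (use nn in auto)
    with s0 have "\<forall>y\<in>succ u. pmf (D u) y * (1 - h y) = 0" by simp
    then have "pmf (D u) x * (1 - h x) = 0" using xs by blast
    then have "h x = 1" using px by simp
    then show ?thesis unfolding h_def g_def by (auto split: if_splits)
  qed
  have "x \<notin> Tgt G" using key[of 0] by (auto split: if_splits)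
  moreover have "x \<in> Vs G" using xs succ_sub by blast
  moreover have "\<not> (K ^^ k) (\<lambda>_. 1) x < 1" for k using key[of k] \<open>x \<notin> Tgt G\<close> by simp
  ultimately show ?thesis by blast
qed

lemma stuck_path:
  assumes u0: "u0 \<in> Vs G - Tgt G" and nt: "\<forall>k. \<not> (K ^^ k) (\<lambda>_. 1) u0 < 1"
    and nx: "\<And>u. u \<in> Vs G - Tgt G \<Longrightarrow> nx u \<in> set_pmf (D u)"
  shows "(nx ^^ i) u0 \<in> Vs G - Tgt G \<and> (\<forall>k. \<not> (K ^^ k) (\<lambda>_. 1) ((nx ^^ i) u0) < 1)"
proof (induction i)
  case 0 then show ?case using u0 nt by simp
next
  case (Suc i)
  then show ?case using stuck_closed[of "(nx ^^ i) u0" "nx ((nx ^^ i) u0)"] nx by simp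
qed

end

lemma scc_eq: "u \<in> scc G v \<Longrightarrow> scc G u = scc G v"
  unfolding scc_def by (auto intro: rtrancl_trans)

lemma no_inf_path:
  assumes wf: "well_formed G" and nc: "NC_strategy G \<sigma>1" and at: "attractor_strategy G \<sigma>2"
    and f0: "f 0 \<in> Vs G" and fe: "\<And>i. (f i, f (Suc i)) \<in> Edg G"
    and fm: "\<And>i. f i \<in> VMin G \<Longrightarrow> f (Suc i) = (if scc_has_neg_cycle G (f i) then \<sigma>2 (f i) else \<sigma>1 (f i))"
  shows False
proof -
  have ein: "(u,x) \<in> Edg G \<Longrightarrow> u \<in> Vs G - Tgt G \<and> x \<in> Vs G" for u x
    using wf unfolding well_formed_def by blast
  have fV: "f i \<in> Vs G - Tgt G" for i using ein fe by blast
  have reach: "i \<le> j \<Longrightarrow> (f i, f j) \<in> (Edg G)\<^sup>*" for i j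
  proof (induction j)
    case 0 then show ?case by simp
  next
    case (Suc j)
    then show ?case
      by (metis le_Suc_eq rtrancl.rtrancl_into_rtrancl rtrancl.rtrancl_refl fe)
  qed
  have twice: False if ij: "i < j" "f i = f j" "f i \<in> VMin G" "\<not> scc_has_neg_cycle G (f i)" for i j
  proof -
    define xs where "xs = map f [i..<Suc j]"
    have len: "length xs = Suc j - i" by (simp add: xs_def del: upt_Suc)
    have nth: "a < Suc j - i \<Longrightarrow> xs ! a = f (i + a)" for a by (simp add: xs_def del: upt_Suc)
    have inscc: "i \<le> k \<Longrightarrow> k \<le> j \<Longrightarrow> f k \<in> scc G (f i)" for k
      using reach[of i k] reach[of k j] ij(2) unfolding scc_def by auto
    have nneg: "i \<le> k \<Longrightarrow> k \<le> j \<Longrightarrow> \<not> scc_has_neg_cycle G (f k)" for k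
      using scc_eq[OF inscc] ij(4) unfolding scc_has_neg_cycle_def by metis
    have cyc: "is_cycle G xs"
      unfolding is_cycle_def is_path_def
    proof (intro conjI allI impI)
      show "xs \<noteq> []" using ij by (simp add: xs_def)
      show "set xs \<subseteq> Vs G" using fV by (auto simp: xs_def)
      show "(xs ! a, xs ! Suc a) \<in> Edg G" if "Suc a < length xs" for a
        using that fe[of "i + a"] by (simp add: len nth)
      show "2 \<le> length xs" using ij len by simp
      show "hd xs = last xs" using ij by (simp add: xs_def hd_map last_map)
    qed
    have conf: "conforms G \<sigma>1 xs"
      unfolding conforms_def
    proof (intro allI impI)
      fix a assume a: "Suc a < length xs" "xs ! a \<in> VMin G"
      then have "f (i + a) \<in> VMin G" by (simp add: len nth)
      moreover have "\<not> scc_has_neg_cycle G (f (i + a))" using a len by (intro nneg) auto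
      ultimately show "xs ! Suc a = \<sigma>1 (xs ! a)" using fm[of "i + a"] a by (simp add: len nth)
    qed
    have "path_weight G xs < 0" using nc cyc conf unfolding NC_strategy_def by blast
    moreover have "set xs \<subseteq> scc G (f i)" using inscc by (auto simp: xs_def)
    ultimately have "scc_has_neg_cycle G (f i)" using cyc unfolding scc_has_neg_cycle_def by blast
    then show False using ij by simp
  qed
  define A where "A = {k. f k \<in> VMin G \<and> \<not> scc_has_neg_cycle G (f k)}"
  have "inj_on f A"
  proof (rule inj_onI)
    fix i j assume "i \<in> A" "j \<in> A" "f i = f j"
    then have "f i \<in> VMin G" "\<not> scc_has_neg_cycle G (f i)" "f j \<in> VMin G" "\<not> scc_has_neg_cycle G (f j)"
      unfolding A_def by auto
    show "i = j"
    proof (rule ccontr)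
      assume "i \<noteq> j"
      then have "i < j \<or> j < i" by arith
      then show False
      proof
        assume "i < j" then show False using twice[of i j] \<open>f i = f j\<close> \<open>f i \<in> VMin G\<close> \<open>\<not> scc_has_neg_cycle G (f i)\<close> by blast
      next
        assume "j < i" then show False using twice[of j i] sym[OF \<open>f i = f j\<close>] \<open>f j \<in> VMin G\<close> \<open>\<not> scc_has_neg_cycle G (f j)\<close> by blast
      qed
    qed
  qed
  moreover have "f ` A \<subseteq> Vs G" using fV by auto
  moreover have "finite (Vs G)" using wf by (simp add: well_formed_def)
  ultimately have finA: "finite A" by (metis finite_imageD finite_subset)
  define K0 where "K0 = (if A = {} then 0 else Suc (Max A))"
  have notA: "K0 \<le> k \<Longrightarrow> k \<notin> A" for k
    using finA by (auto simp: K0_def split: if_splits dest: Max_ge)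
  define g where "g = (\<lambda>i. f (K0 + i))"
  have "\<exists>i. g i \<in> Tgt G"
    using at unfolding attractor_strategy_def
  proof (elim conjE allE impE)
    show "g 0 \<in> Vs G" using fV by (simp add: g_def)
    show "\<forall>i. (g i, g (Suc i)) \<in> Edg G" using fe by (simp add: g_def)
    show "\<forall>i. g i \<in> VMin G \<longrightarrow> g (Suc i) = \<sigma>2 (g i)"
    proof (intro allI impI)
      fix i assume "g i \<in> VMin G"
      moreover have "K0 + i \<notin> A" using notA by simp
      ultimately show "g (Suc i) = \<sigma>2 (g i)" using fm[of "K0 + i"] by (simp add: g_def A_def)
    qed
  qed
  then show False using fV by (auto simp: g_def)
qed

lemma succ_split: "successively P (xs @ y # zs) \<longleftrightarrow> successively P (xs @ [y]) \<and> successively P (y # zs)"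
  by (simp add: successively_append_iff) blast

lemma succ_cut:
  assumes "successively P (a @ y # b @ y # e)"
  shows "successively P (a @ y # e)" "successively P (y # b @ [y])"
proof -
  have 1: "successively P (a @ [y]) \<and> successively P (y # b @ y # e)" using succ_split[THEN iffD1, OF assms] .
  have "successively P ((y # b) @ y # e)" using 1 by simp
  then have 2: "successively P ((y # b) @ [y]) \<and> successively P (y # e)" by (rule succ_split[of P "y # b" y e, THEN iffD1])
  have "successively P (a @ y # e)" using 1 2 by (intro succ_split[of P a y e, THEN iffD2]) blast
  then show "successively P (a @ y # e)" .
  show "successively P (y # b @ [y])" using 2 by simp
qed

lemma wt_bound_g: "well_formed G \<Longrightarrow> e \<in> Edg G \<Longrightarrow> \<bar>wt G e\<bar> \<le> maxW G"
proof -
  assume wf: "well_formed G" and e: "e \<in> Edg G"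
  have "Edg G \<subseteq> Vs G \<times> Vs G" "finite (Vs G)" using wf unfolding well_formed_def by blast+
  then have "finite (Edg G)" using finite_subset by blast
  then show ?thesis unfolding maxW_def using e by (intro Max_ge) auto
qed

lemma maxW_nonneg_g: "well_formed G \<Longrightarrow> 0 \<le> maxW G"
proof -
  assume wf: "well_formed G"
  have "Edg G \<subseteq> Vs G \<times> Vs G" "finite (Vs G)" using wf unfolding well_formed_def by blast+
  then have "finite (Edg G)" using finite_subset by blast
  then show ?thesis unfolding maxW_def by (intro Max_ge) auto
qed

lemma pw_path_bound_g: "well_formed G \<Longrightarrow> is_path G xs \<Longrightarrow> \<bar>real_of_int (pw G xs)\<bar> \<le> real_of_int (maxW G) * (real (length xs) - 1)"
proof -
  assume wf: "well_formed G" and p: "is_path G xs"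
  then have "xs \<noteq> []" "\<forall>i. Suc i < length xs \<longrightarrow> (xs!i, xs!Suc i) \<in> Edg G" by (auto simp: is_path_def)
  then have "\<bar>pw G xs\<bar> \<le> maxW G * (int (length xs) - 1)"
    using wt_bound_g[OF wf] by (intro pw_bound) auto
  then have "real_of_int \<bar>pw G xs\<bar> \<le> real_of_int (maxW G * (int (length xs) - 1))" by linarith
  then show ?thesis by simp
qed

definition Pi_set :: "'v spgame \<Rightarrow> ('v \<Rightarrow> 'v) \<Rightarrow> 'v \<Rightarrow> 'v list set" where
  "Pi_set G s v = {xs. is_path G xs \<and> hd xs = v \<and> conforms G s xs \<and> set (butlast xs) \<inter> Tgt G = {}}"

definition pval :: "'v spgame \<Rightarrow> real \<Rightarrow> real \<Rightarrow> 'v list \<Rightarrow> real" where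
  "pval G lam M xs = real_of_int (pw G xs) + lam * (real (length xs) - 1) + (if last xs \<in> Tgt G then 0 else - M)"

definition phi :: "'v spgame \<Rightarrow> ('v \<Rightarrow> 'v) \<Rightarrow> real \<Rightarrow> real \<Rightarrow> 'v \<Rightarrow> real" where
  "phi G s lam M v = Sup (pval G lam M ` Pi_set G s v)"

lemma reduce:
  assumes wf: "well_formed G" and nc: "NC_strategy G s" and lam: "0 \<le> lam" "lam * real (card (Vs G)) \<le> 1"
  shows "xs \<in> Pi_set G s v \<Longrightarrow> \<exists>ys\<in>Pi_set G s v. length ys \<le> card (Vs G) \<and> last ys = last xs \<and> pval G lam M xs \<le> pval G lam M ys"
proof (induction "length xs" arbitrary: xs rule: less_induct)
  case less
  note xsP = less.prems
  show ?case
  proof (cases "length xs \<le> card (Vs G)")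
    case True then show ?thesis using xsP by blast
  next
    case False
    define n where "n = card (Vs G)"
    have finV: "finite (Vs G)" using wf by (simp add: well_formed_def)
    have xs: "xs \<noteq> []" "set xs \<subseteq> Vs G" "successively (\<lambda>a b. (a,b) \<in> Edg G) xs"
      "hd xs = v" "successively (\<lambda>a b. a \<in> VMin G \<longrightarrow> b = s a) xs" "set (butlast xs) \<inter> Tgt G = {}"
      using xsP unfolding Pi_set_def is_path_alt conforms_alt by auto
    have "\<not> distinct (take (Suc n) xs)"
    proof
      assume d: "distinct (take (Suc n) xs)"
      have "card (set (take (Suc n) xs)) = Suc n" using distinct_card[OF d] False n_def by simp
      moreover have "card (set (take (Suc n) xs)) \<le> n"
      proof -
        have "set (take (Suc n) xs) \<subseteq> Vs G" using xs(2) set_take_subset[of "Suc n" xs] by blast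
        then show ?thesis unfolding n_def using finV by (rule card_mono[rotated])
      qed
      ultimately show False by simp
    qed
    then obtain a y b c where tk: "take (Suc n) xs = a @ [y] @ b @ [y] @ c"
      using not_distinct_decomp by blast
    define e where "e = c @ drop (Suc n) xs"
    have xs_eq: "xs = a @ y # b @ y # e"
      using append_take_drop_id[of "Suc n" xs] tk by (simp add: e_def)
    have lb: "length b + 1 \<le> n"
    proof -
      have "length (take (Suc n) xs) = Suc n" using False n_def by simp
      then show ?thesis using tk by simp
    qed
    define ys where "ys = a @ y # e"
    have lys: "length xs = length ys + (length b + 1)" by (simp add: xs_eq ys_def)
    define cyc where "cyc = y # b @ [y]"
    have s1: "successively (\<lambda>a b. (a,b) \<in> Edg G) ys" "successively (\<lambda>a b. (a,b) \<in> Edg G) cyc"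
      using succ_cut[of _ a y b e] xs(3) by (auto simp: ys_def cyc_def xs_eq)
    have s2: "successively (\<lambda>a b. a \<in> VMin G \<longrightarrow> b = s a) ys" "successively (\<lambda>a b. a \<in> VMin G \<longrightarrow> b = s a) cyc"
      using succ_cut[of _ a y b e] xs(5) by (auto simp: ys_def cyc_def xs_eq)
    have setys: "set ys \<subseteq> Vs G" "set cyc \<subseteq> Vs G" using xs(2) by (auto simp: ys_def cyc_def xs_eq)
    have hdys: "hd ys = v" using xs(4) by (cases a) (auto simp: ys_def xs_eq)
    have blys: "set (butlast ys) \<inter> Tgt G = {}"
    proof -
      have "set (butlast ys) \<subseteq> set (butlast xs)"
        by (cases e) (auto simp: ys_def xs_eq butlast_append)
      then show ?thesis using xs(6) by blast
    qed
    have ysP: "ys \<in> Pi_set G s v"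
      unfolding Pi_set_def is_path_alt conforms_alt using s1 s2 setys hdys blys by (auto simp: ys_def)
    have "is_cycle G cyc" unfolding is_cycle_def is_path_alt using s1 setys by (auto simp: cyc_def)
    moreover have "conforms G s cyc" unfolding conforms_alt using s2 by simp
    ultimately have "path_weight G cyc < 0" using nc unfolding NC_strategy_def by blast
    then have pwc: "pw G cyc \<le> -1" by (simp add: path_weight_pw)
    have pwx: "pw G xs = pw G ys + pw G cyc"
    proof -
      have "pw G xs = pw G (a @ [y]) + pw G (y # b @ y # e)" unfolding xs_eq by (rule pw_split)
      moreover have "pw G (y # b @ y # e) = pw G ((y # b) @ [y]) + pw G (y # e)"
        using pw_split[of G "y # b" y e] by simp
      moreover have "pw G ys = pw G (a @ [y]) + pw G (y # e)" unfolding ys_def by (rule pw_split)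
      ultimately show ?thesis by (simp add: cyc_def)
    qed
    have lst: "last ys = last xs" by (cases e) (auto simp: ys_def xs_eq)
    have "pval G lam M xs \<le> pval G lam M ys"
    proof -
      have "lam * real (length b + 1) \<le> lam * real n" using lb lam by (intro mult_left_mono) auto
      moreover have "lam * real n \<le> 1" using lam(2) n_def by simp
      ultimately have "lam * real (length b + 1) \<le> 1" by linarith
      then have "real_of_int (pw G cyc) + lam * real (length b + 1) \<le> 0" using pwc by linarith
      then show ?thesis unfolding pval_def using lst pwx lys by (simp add: algebra_simps)
    qed
    moreover have "length ys < length xs" using lys by simp
    ultimately show ?thesis using less.hyps[OF _ ysP] lst by fastforce
  qed
qed

locale phictx =
  fixes G :: "'v spgame" and s :: "'v \<Rightarrow> 'v" and lam M :: real
  assumes wf: "well_formed G" and nc: "NC_strategy G s" and lam0: "0 < lam"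
    and lamn: "lam * real (card (Vs G)) \<le> 1" and M0: "0 \<le> M"
begin

definition Wr where "Wr = real_of_int (maxW G)"

lemma Wr0: "0 \<le> Wr" using maxW_nonneg_g[OF wf] by (simp add: Wr_def)

lemma TV: "Tgt G \<subseteq> Vs G" by (simp add: Vs_def)

lemma single: "v \<in> Vs G \<Longrightarrow> [v] \<in> Pi_set G s v"
  unfolding Pi_set_def is_path_def conforms_def by auto

lemma short_bound:
  assumes ys: "ys \<in> Pi_set G s v" and l: "length ys \<le> card (Vs G)"
  shows "pval G lam M ys \<le> (Wr + lam) * real (card (Vs G))"
proof -
  have p: "is_path G ys" using ys by (simp add: Pi_set_def)
  have "real_of_int (pw G ys) \<le> Wr * (real (length ys) - 1)"
    using pw_path_bound_g[OF wf p] by (simp add: Wr_def)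
  also have "\<dots> \<le> Wr * real (card (Vs G))" using l Wr0 by (intro mult_left_mono) auto
  finally have 1: "real_of_int (pw G ys) \<le> Wr * real (card (Vs G))" .
  have 2: "lam * (real (length ys) - 1) \<le> lam * real (card (Vs G))" using l lam0 by (intro mult_left_mono) auto
  show ?thesis unfolding pval_def using 1 2 M0 by (simp add: algebra_simps)
qed

lemma pval_bound: "xs \<in> Pi_set G s v \<Longrightarrow> pval G lam M xs \<le> (Wr + lam) * real (card (Vs G))"
  using reduce[OF wf nc less_imp_le[OF lam0] lamn, of xs v M] short_bound by force

lemma bdd: "bdd_above (pval G lam M ` Pi_set G s v)"
  using pval_bound by (intro bdd_aboveI2) blast

lemma Pi_T: "v \<in> Tgt G \<Longrightarrow> Pi_set G s v = {[v]}"
proof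
  assume v: "v \<in> Tgt G"
  show "Pi_set G s v \<subseteq> {[v]}"
  proof
    fix xs assume xs: "xs \<in> Pi_set G s v"
    then have xs1: "xs \<noteq> []" "hd xs = v" "set (butlast xs) \<inter> Tgt G = {}" by (auto simp: Pi_set_def is_path_def)
    have "length xs = 1"
    proof (rule ccontr)
      assume "length xs \<noteq> 1"
      then obtain a b ys where "xs = a # b # ys" using xs1 by (metis One_nat_def length_Cons list.exhaust list.size(3))
      then have "hd xs \<in> set (butlast xs)" by simp
      then show False using xs1 v by blast
    qed
    then show "xs \<in> {[v]}" using xs1 by (cases xs) auto
  qed
  show "{[v]} \<subseteq> Pi_set G s v" using single TV v by auto
qed

lemma phi_T: "v \<in> Tgt G \<Longrightarrow> phi G s lam M v = 0"
  unfolding phi_def by (simp add: Pi_T pval_def)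

lemma phi_lower: "v \<in> Vs G - Tgt G \<Longrightarrow> - M \<le> phi G s lam M v"
proof -
  assume v: "v \<in> Vs G - Tgt G"
  have "pval G lam M [v] \<le> phi G s lam M v"
    unfolding phi_def using single[of v] v bdd by (intro cSup_upper) auto
  then show ?thesis using v by (simp add: pval_def)
qed

lemma phi_upper: "v \<in> Vs G \<Longrightarrow> phi G s lam M v \<le> (Wr + lam) * real (card (Vs G))"
  unfolding phi_def using single pval_bound by (intro cSup_least) auto

lemma phi_edge:
  assumes u: "u \<in> Vs G - Tgt G" and e: "(u,x) \<in> Edg G" and m: "u \<in> VMin G \<Longrightarrow> x = s u"
  shows "real_of_int (wt G (u,x)) + lam + phi G s lam M x \<le> phi G s lam M u"
proof -
  have x: "x \<in> Vs G" using wf e unfolding well_formed_def by blast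
  have "pval G lam M ys \<le> phi G s lam M u - real_of_int (wt G (u,x)) - lam" if ys: "ys \<in> Pi_set G s x" for ys
  proof -
    have ys1: "ys \<noteq> []" "set ys \<subseteq> Vs G" "successively (\<lambda>a b. (a,b) \<in> Edg G) ys" "hd ys = x"
      "successively (\<lambda>a b. a \<in> VMin G \<longrightarrow> b = s a) ys" "set (butlast ys) \<inter> Tgt G = {}"
      using ys unfolding Pi_set_def is_path_alt conforms_alt by auto
    have "u # ys \<in> Pi_set G s u"
      unfolding Pi_set_def is_path_alt conforms_alt using ys1 u e m by (auto simp: successively_Cons)
    then have "pval G lam M (u # ys) \<le> phi G s lam M u" unfolding phi_def using bdd by (intro cSup_upper) auto
    moreover have "pw G (u # ys) = wt G (u,x) + pw G ys" using ys1 by (cases ys) auto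
    ultimately show ?thesis using ys1 unfolding pval_def by (simp add: algebra_simps)
  qed
  then have "phi G s lam M x \<le> phi G s lam M u - real_of_int (wt G (u,x)) - lam"
    unfolding phi_def using single[OF x] by (intro cSup_least) auto
  then show ?thesis by simp
qed

lemma phi_final:
  assumes v: "v \<in> Vs G" and fo: "fake_optimal G s" and R: "Val_d G v \<le> ereal R"
    and eps: "lam * real (card (Vs G)) \<le> \<epsilon>" and MR: "(Wr + lam) * real (card (Vs G)) - M \<le> R"
  shows "phi G s lam M v \<le> R + \<epsilon>"
  unfolding phi_def
proof (rule cSup_least)
  show "pval G lam M ` Pi_set G s v \<noteq> {}" using single[OF v] by blast
next
  fix z assume "z \<in> pval G lam M ` Pi_set G s v"
  then obtain xs where xs: "xs \<in> Pi_set G s v" and z: "z = pval G lam M xs" by blast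
  obtain ys where ys: "ys \<in> Pi_set G s v" "length ys \<le> card (Vs G)" "pval G lam M xs \<le> pval G lam M ys"
    using reduce[OF wf nc less_imp_le[OF lam0] lamn xs, of M] by blast
  have e0: "0 \<le> \<epsilon>" using eps lam0 by (smt (verit) mult_nonneg_nonneg of_nat_0_le_iff)
  have "pval G lam M ys \<le> R + \<epsilon>"
  proof (cases "last ys \<in> Tgt G")
    case True
    have fp: "fin_play G v ys" "conforms G s ys" using ys(1) True unfolding Pi_set_def fin_play_alt by auto
    have "ereal (real_of_int (path_weight G ys)) \<le> Sup {ereal (real_of_int (path_weight G xs)) | xs. fin_play G v xs \<and> conforms G s xs}"
      using fp by (intro Sup_upper) blast
    also have "\<dots> \<le> Val_d G v" using fo v unfolding fake_optimal_def by blast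
    also have "\<dots> \<le> ereal R" by (rule R)
    finally have "real_of_int (pw G ys) \<le> R" by (simp add: path_weight_pw)
    moreover have "lam * (real (length ys) - 1) \<le> lam * real (card (Vs G))" using ys(2) lam0 by (intro mult_left_mono) auto
    ultimately show ?thesis using True eps unfolding pval_def by simp
  next
    case False
    have "pval G lam M ys \<le> (Wr + lam) * real (card (Vs G))" using short_bound ys by blast
    moreover have "pval G lam M ys \<le> (Wr + lam) * real (card (Vs G)) - M"
    proof -
      have p: "is_path G ys" using ys by (simp add: Pi_set_def)
      have "real_of_int (pw G ys) \<le> Wr * (real (length ys) - 1)"
        using pw_path_bound_g[OF wf p] by (simp add: Wr_def)
      also have "\<dots> \<le> Wr * real (card (Vs G))" using ys(2) Wr0 by (intro mult_left_mono) auto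
      finally have 1: "real_of_int (pw G ys) \<le> Wr * real (card (Vs G))" .
      have 2: "lam * (real (length ys) - 1) \<le> lam * real (card (Vs G))" using ys(2) lam0 by (intro mult_left_mono) auto
      show ?thesis unfolding pval_def using 1 2 False by (simp add: algebra_simps)
    qed
    then show ?thesis using MR e0 by linarith
  qed
  then show "z \<le> R + \<epsilon>" using z ys(3) by linarith
qed

end

lemma VminV: "u \<in> Vs G - Tgt G \<Longrightarrow> u \<notin> VMin G \<Longrightarrow> u \<in> VMax G"
  by (auto simp: Vs_def)

lemma rho_supp:
  assumes "md_strat_Min G s1" "md_strat_Min G s2" "u \<in> VMin G"
  shows "set_pmf (rho_p G s1 s2 p u) \<subseteq> {x. (u,x) \<in> Edg G}"
  using assms unfolding rho_p_def md_strat_Min_def by (auto simp: set_pmf_bernoulli split: if_splits)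

lemma chain_game:
  assumes wf: "well_formed G" and m1: "md_strat_Min G s1" and m2: "md_strat_Min G s2"
    and tau: "ml_strat_Max G \<tau>"
  shows "chain G (\<lambda>u. if u \<in> VMin G then rho_p G s1 s2 p u else \<tau> u)"
proof (unfold_locales)
  show "well_formed G" by (rule wf)
  fix u assume u: "u \<in> Vs G - Tgt G"
  show "set_pmf (if u \<in> VMin G then rho_p G s1 s2 p u else \<tau> u) \<subseteq> {x. (u, x) \<in> Edg G}"
  proof (cases "u \<in> VMin G")
    case True then show ?thesis using rho_supp[OF m1 m2 True] by simp
  next
    case False then show ?thesis using VminV[OF u False] tau unfolding ml_strat_Max_def by auto
  qed
qed

lemma pmf_rho_s1:
  assumes "0 \<le> p" "p \<le> 1"
  shows "p \<le> pmf (rho_p G s1 s2 p u) (s1 u)"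
proof -
  have "pmf (map_pmf (\<lambda>b. if b then s1 u else s2 u) (bernoulli_pmf p)) (s1 u) = p" if "s1 u \<noteq> s2 u"
  proof -
    have "(\<lambda>b. if b then s1 u else s2 u) -` {s1 u} = {True}" using that by (auto split: if_splits)
    then show ?thesis using assms by (simp add: pmf_map measure_pmf_single)
  qed
  then show ?thesis unfolding rho_p_def using assms by auto
qed

lemma term_game:
  assumes wf: "well_formed G" and nc: "NC_strategy G s1" and at: "attractor_strategy G s2"
    and p: "0 < p" "p < 1" and tau: "ml_strat_Max G \<tau>"
  shows "chain_term G (\<lambda>u. if u \<in> VMin G then rho_p G s1 s2 p u else \<tau> u)"
proof -
  define D where "D = (\<lambda>u. if u \<in> VMin G then rho_p G s1 s2 p u else \<tau> u)"
  have m1: "md_strat_Min G s1" using nc by (simp add: NC_strategy_def)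
  have m2: "md_strat_Min G s2" using at by (simp add: attractor_strategy_def)
  have ch: "chain G D" unfolding D_def by (rule chain_game[OF wf m1 m2 tau])
  interpret chain G D by (rule ch)
  define nx where "nx = (\<lambda>u. if u \<in> VMin G then (if scc_has_neg_cycle G u then s2 u else s1 u)
                          else (SOME x. x \<in> set_pmf (\<tau> u)))"
  have nxD: "nx u \<in> set_pmf (D u)" if "u \<in> Vs G - Tgt G" for u
  proof (cases "u \<in> VMin G")
    case True
    then show ?thesis using p unfolding nx_def D_def rho_p_def by (auto simp: set_pmf_bernoulli)
  next
    case False
    then show ?thesis unfolding nx_def D_def using set_pmf_not_empty[of "\<tau> u"] by (simp add: some_in_eq)
  qed
  have "\<exists>k. (K ^^ k) (\<lambda>_. 1) u < 1" if u: "u \<in> Vs G - Tgt G" for u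
  proof (rule ccontr)
    assume "\<not> (\<exists>k. (K ^^ k) (\<lambda>_. 1) u < 1)"
    then have nt: "\<forall>k. \<not> (K ^^ k) (\<lambda>_. 1) u < 1" by blast
    define f where "f = (\<lambda>i. (nx ^^ i) u)"
    have fV: "f i \<in> Vs G - Tgt G" for i using stuck_path[OF u nt nxD] by (simp add: f_def)
    have fS: "f (Suc i) = nx (f i)" for i by (simp add: f_def)
    have fe: "(f i, f (Suc i)) \<in> Edg G" for i
      using nxD[OF fV[of i]] supp[OF fV[of i]] fS[of i] by auto
    show False
    proof (rule no_inf_path[OF wf nc at, of f])
      show "f 0 \<in> Vs G" using fV[of 0] by simp
      show "(f i, f (Suc i)) \<in> Edg G" for i by (rule fe)
      show "f (Suc i) = (if scc_has_neg_cycle G (f i) then s2 (f i) else s1 (f i))" if "f i \<in> VMin G" for i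
        using that fS[of i] by (simp add: nx_def)
    qed
  qed
  then have "chain_term G D" by (intro chain_term.intro ch) (simp add: chain_term_axioms_def)
  then show ?thesis by (simp add: D_def)
qed

lemma drift_game:
  assumes ph: "phictx G s1 lam M" and m1: "md_strat_Min G s1" and m2: "md_strat_Min G s2"
    and p: "0 \<le> p" "p \<le> 1"
    and cond: "(1 - p) * (real_of_int (maxW G) + (real_of_int (maxW G) + lam) * real (card (Vs G)) + M) \<le> p * lam"
    and tau: "ml_strat_Max G \<tau>" and u: "u \<in> Vs G - Tgt G"
  shows "(\<Sum>x\<in>{x. (u,x) \<in> Edg G}. pmf ((\<lambda>u. if u \<in> VMin G then rho_p G s1 s2 p u else \<tau> u) u) x
            * (real_of_int (wt G (u,x)) + phi G s1 lam M x)) \<le> phi G s1 lam M u"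
proof -
  interpret phictx G s1 lam M by (rule ph)
  define D where "D = (\<lambda>u. if u \<in> VMin G then rho_p G s1 s2 p u else \<tau> u)"
  interpret chain G D unfolding D_def by (rule chain_game[OF wf m1 m2 tau])
  define S where "S = {x. (u,x) \<in> Edg G}"
  have S: "S = succ u" by (simp add: S_def succ_def)
  have finS: "finite S" using fin_succ S by simp
  have sum1: "(\<Sum>x\<in>S. pmf (D u) x) = 1" using sum_succ[OF u] S by simp
  define \<phi> where "\<phi> = phi G s1 lam M"
  define Bx where "Bx = Wr + (Wr + lam) * real (card (Vs G))"
  have xV: "x \<in> S \<Longrightarrow> x \<in> Vs G" for x using succ_sub S by blast
  show ?thesis
  proof (cases "u \<in> VMin G")
    case False
    have "(\<Sum>x\<in>S. pmf (D u) x * (real_of_int (wt G (u,x)) + \<phi> x)) \<le> (\<Sum>x\<in>S. pmf (D u) x * (\<phi> u - lam))"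
    proof (rule sum_mono)
      fix x assume x: "x \<in> S"
      have "real_of_int (wt G (u,x)) + lam + \<phi> x \<le> \<phi> u" unfolding \<phi>_def
        using phi_edge[OF u] x False by (simp add: S_def)
      then show "pmf (D u) x * (real_of_int (wt G (u,x)) + \<phi> x) \<le> pmf (D u) x * (\<phi> u - lam)"
        by (intro mult_left_mono) auto
    qed
    also have "\<dots> = \<phi> u - lam" using sum1 by (simp add: sum_distrib_right[symmetric])
    also have "\<dots> \<le> \<phi> u" using lam0 by simp
    finally show ?thesis by (simp add: S_def D_def \<phi>_def)
  next
    case True
    define a where "a = s1 u"
    have aS: "a \<in> S" using m1 True by (simp add: a_def S_def md_strat_Min_def)
    define q where "q = pmf (D u) a"
    have qp: "p \<le> q" using pmf_rho_s1[OF p] True by (simp add: q_def D_def a_def)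
    have q1: "q \<le> 1" by (simp add: q_def pmf_le_1)
    define h where "h = (\<lambda>x. if x = a then \<phi> u - lam else Bx)"
    have "(\<Sum>x\<in>S. pmf (D u) x * (real_of_int (wt G (u,x)) + \<phi> x)) \<le> (\<Sum>x\<in>S. pmf (D u) x * h x)"
    proof (rule sum_mono)
      fix x assume x: "x \<in> S"
      have "real_of_int (wt G (u,x)) + \<phi> x \<le> h x"
      proof (cases "x = a")
        case True
        then have "real_of_int (wt G (u,x)) + lam + \<phi> x \<le> \<phi> u" unfolding \<phi>_def
          using phi_edge[OF u] x by (simp add: S_def a_def)
        then show ?thesis using True by (simp add: h_def)
      next
        case False
        have "\<bar>wt G (u,x)\<bar> \<le> maxW G" using wt_bound_g[OF wf] x by (simp add: S_def)
        then have "real_of_int (wt G (u,x)) \<le> Wr" unfolding Wr_def by linarith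
        moreover have "\<phi> x \<le> (Wr + lam) * real (card (Vs G))" unfolding \<phi>_def using phi_upper xV[OF x] by blast
        ultimately show ?thesis using False by (simp add: h_def Bx_def)
      qed
      then show "pmf (D u) x * (real_of_int (wt G (u,x)) + \<phi> x) \<le> pmf (D u) x * h x"
        by (intro mult_left_mono) auto
    qed
    also have "(\<Sum>x\<in>S. pmf (D u) x * h x) = q * (\<phi> u - lam) + (1 - q) * Bx"
    proof -
      have "(\<Sum>x\<in>S. pmf (D u) x * h x) = pmf (D u) a * h a + (\<Sum>x\<in>S - {a}. pmf (D u) x * h x)"
        using sum.remove[OF finS aS] by blast
      also have "(\<Sum>x\<in>S - {a}. pmf (D u) x * h x) = (\<Sum>x\<in>S - {a}. pmf (D u) x) * Bx"
        by (simp add: h_def sum_distrib_right)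
      also have "(\<Sum>x\<in>S - {a}. pmf (D u) x) = 1 - q"
        using sum.remove[OF finS aS, of "pmf (D u)"] sum1 by (simp add: q_def)
      finally show ?thesis by (simp add: h_def q_def)
    qed
    also have "\<dots> \<le> \<phi> u"
    proof -
      have lo: "- M \<le> \<phi> u" unfolding \<phi>_def using phi_lower[OF u] .
      have B0: "0 \<le> Bx + M" using Wr0 lam0 M0 by (simp add: Bx_def)
      have "(1 - q) * (Bx - \<phi> u) \<le> (1 - q) * (Bx + M)" using lo q1 by (intro mult_left_mono) auto
      also have "\<dots> \<le> (1 - p) * (Bx + M)" using qp B0 by (intro mult_right_mono) auto
      also have "\<dots> \<le> p * lam" using cond by (simp add: Bx_def Wr_def)
      also have "\<dots> \<le> q * lam" using qp lam0 by (intro mult_right_mono) auto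
      finally have "(1 - q) * (Bx - \<phi> u) \<le> q * lam" .
      then show ?thesis by (simp add: algebra_simps)
    qed
    finally show ?thesis by (simp add: S_def D_def \<phi>_def)
  qed
qed

lemma main_bound:
  assumes wf: "well_formed G" and nc: "NC_strategy G \<sigma>1" and fo: "fake_optimal G \<sigma>1"
    and at: "attractor_strategy G \<sigma>2" and v0: "v0 \<in> Vs G"
  shows "\<exists>\<epsilon>0 > 0. \<forall>\<epsilon>. 0 < \<epsilon> \<and> \<epsilon> < \<epsilon>0 \<longrightarrow>
           (\<exists>p0 < 1. \<forall>p. p0 \<le> p \<and> p < 1 \<longrightarrow> 0 < p \<longrightarrow>
              (\<forall>\<tau>. ml_strat_Max G \<tau> \<longrightarrow>
                 exp_TP G (rho_p G \<sigma>1 \<sigma>2 p) \<tau> v0 \<le> Val_strat G (switching \<sigma>1 \<sigma>2 \<alpha>) v0 + ereal \<epsilon>))"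
proof -
  have m1: "md_strat_Min G \<sigma>1" using nc by (simp add: NC_strategy_def)
  have m2: "md_strat_Min G \<sigma>2" using at by (simp add: attractor_strategy_def)
  define \<sigma> where "\<sigma> = switching \<sigma>1 \<sigma>2 \<alpha>"
  have dsm: "det_strat_Min G \<sigma>"
    using m1 m2 unfolding det_strat_Min_def \<sigma>_def switching_def md_strat_Min_def by auto
  have Vd: "Val_d G v0 \<le> Val_strat G \<sigma> v0" unfolding Val_d_def by (rule INF_lower) (simp add: dsm)
  define \<tau>0 where "\<tau>0 = (\<lambda>h. SOME x. (last h, x) \<in> Edg G)"
  have dtm: "det_strat_Max G \<tau>0" unfolding det_strat_Max_def
  proof (intro allI impI)
    fix h :: "'a list" assume "h \<noteq> []" "last h \<in> VMax G"
    then have "last h \<in> Vs G - Tgt G" using wf by (auto simp: well_formed_def Vs_def)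
    then have "\<exists>x. (last h, x) \<in> Edg G" using wf by (simp add: well_formed_def)
    then show "(last h, \<tau>0 h) \<in> Edg G" unfolding \<tau>0_def by (rule someI_ex)
  qed
  have "TP_out G v0 \<sigma> \<tau>0 \<le> Val_strat G \<sigma> v0" unfolding Val_strat_def by (rule SUP_upper) (simp add: dtm)
  moreover have "TP_out G v0 \<sigma> \<tau>0 \<noteq> - \<infinity>" unfolding TP_out_def by simp
  ultimately have nm: "Val_strat G \<sigma> v0 \<noteq> - \<infinity>" by auto
  show ?thesis
  proof (rule exI[of _ "1::real"], intro conjI allI impI)
    show "(0::real) < 1" by simp
    fix \<epsilon> :: real assume \<epsilon>: "0 < \<epsilon> \<and> \<epsilon> < 1"
    show "\<exists>p0<1. \<forall>p. p0 \<le> p \<and> p < 1 \<longrightarrow> 0 < p \<longrightarrow> (\<forall>\<tau>. ml_strat_Max G \<tau> \<longrightarrow>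
            exp_TP G (rho_p G \<sigma>1 \<sigma>2 p) \<tau> v0 \<le> Val_strat G (switching \<sigma>1 \<sigma>2 \<alpha>) v0 + ereal \<epsilon>)"
    proof (cases "Val_strat G \<sigma> v0 = \<infinity>")
      case True
      then show ?thesis unfolding \<sigma>_def[symmetric] by (intro exI[of _ "1/2"]) simp
    next
      case False
      then obtain R where R: "Val_strat G \<sigma> v0 = ereal R" using nm by (cases "Val_strat G \<sigma> v0") auto
      define n where "n = real (card (Vs G))"
      define lam where "lam = min 1 \<epsilon> / (n + 1)"
      define Wr where "Wr = real_of_int (maxW G)"
      define M where "M = max 0 ((Wr + lam) * n - R)"
      define Bx where "Bx = Wr + (Wr + lam) * n"
      define Sd where "Sd = Bx + M + lam"
      define p0 where "p0 = 1 - lam / Sd"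
      have n0: "0 \<le> n" by (simp add: n_def)
      have lam0: "0 < lam" using \<epsilon> n0 by (simp add: lam_def)
      have lamn_m: "lam * n \<le> min 1 \<epsilon>"
      proof -
        have "lam * n = min 1 \<epsilon> * (n / (n + 1))" by (simp add: lam_def)
        also have "\<dots> \<le> min 1 \<epsilon> * 1" using n0 \<epsilon> by (intro mult_left_mono) auto
        finally show ?thesis by simp
      qed
      have lamn: "lam * n \<le> 1" "lam * n \<le> \<epsilon>" using lamn_m by auto
      have Wr0: "0 \<le> Wr" using maxW_nonneg_g[OF wf] by (simp add: Wr_def)
      have M0: "0 \<le> M" by (simp add: M_def)
      have Bx0: "0 \<le> Bx" using Wr0 lam0 n0 by (simp add: Bx_def)
      have Sd0: "0 < Sd" using Bx0 M0 lam0 by (simp add: Sd_def)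
      have ph: "phictx G \<sigma>1 lam M"
        using wf nc lam0 lamn(1) M0 by unfold_locales (auto simp: n_def)
      have p01: "p0 < 1" using lam0 Sd0 by (simp add: p0_def)
      show ?thesis
      proof (intro exI[of _ p0] conjI p01 allI impI)
        fix p :: real and \<tau>
        assume pp: "p0 \<le> p \<and> p < 1" and p0': "0 < p" and tau: "ml_strat_Max G \<tau>"
        have cond: "(1 - p) * (Bx + M) \<le> p * lam"
        proof -
          have "1 - p \<le> lam / Sd" using pp by (simp add: p0_def)
          then have "(1 - p) * Sd \<le> lam" using Sd0 by (simp add: pos_le_divide_eq)
          then show ?thesis by (simp add: Sd_def algebra_simps)
        qed
        define D where "D = (\<lambda>u. if u \<in> VMin G then rho_p G \<sigma>1 \<sigma>2 p u else \<tau> u)"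
        interpret chain_term G D unfolding D_def by (rule term_game[OF wf nc at p0' _ tau]) (use pp in simp)
        define \<phi> where "\<phi> = phi G \<sigma>1 lam M"
        have \<phi>0: "\<And>x. x \<in> Tgt G \<Longrightarrow> \<phi> x = 0" unfolding \<phi>_def using phictx.phi_T[OF ph] by blast
        have \<phi>b: "\<bar>\<phi> x\<bar> \<le> M + (Wr + lam) * n" if x: "x \<in> Vs G" for x
        proof (cases "x \<in> Tgt G")
          case True then show ?thesis using \<phi>0 M0 Wr0 lam0 n0 by simp
        next
          case False
          have "- M \<le> \<phi> x" unfolding \<phi>_def using phictx.phi_lower[OF ph] x False by blast
          moreover have "\<phi> x \<le> (Wr + lam) * n" unfolding \<phi>_def n_def Wr_def
            using phictx.phi_upper[OF ph x] by (simp add: phictx.Wr_def[OF ph])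
          moreover have "0 \<le> (Wr + lam) * n" using Wr0 lam0 n0 by simp
          ultimately show ?thesis using M0 by (simp add: abs_le_iff)
        qed
        have drift: "(\<Sum>x\<in>succ u. pmf (D u) x * (real_of_int (wt G (u,x)) + \<phi> x)) \<le> \<phi> u"
          if u: "u \<in> Vs G - Tgt G" for u
          using drift_game[OF ph m1 m2 _ _ _ tau u, of p] cond pp p0' unfolding succ_def D_def \<phi>_def
          by (simp add: Bx_def Wr_def n_def)
        have res: "infsum (pp D) (Fp v0) = 1" "infsum (\<lambda>xs. pp D xs * real_of_int (pw G xs)) (Fp v0) \<le> \<phi> v0"
          using chain_main[OF v0 \<phi>0 \<phi>b drift] by auto
        have fin: "\<phi> v0 \<le> R + \<epsilon>" unfolding \<phi>_def
        proof (rule phictx.phi_final[OF ph v0 fo])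
          show "Val_d G v0 \<le> ereal R" using Vd R by simp
          show "lam * real (card (Vs G)) \<le> \<epsilon>" using lamn(2) by (simp add: n_def)
          show "(phictx.Wr G + lam) * real (card (Vs G)) - M \<le> R"
            by (simp add: phictx.Wr_def[OF ph] M_def Wr_def n_def)
        qed
        have ppe: "path_prob G (rho_p G \<sigma>1 \<sigma>2 p) \<tau> = pp D" by (rule ext) (simp add: path_prob_pp D_def)
        have pwe: "path_weight G = pw G" by (rule ext) (simp add: path_weight_pw)
        have "exp_TP G (rho_p G \<sigma>1 \<sigma>2 p) \<tau> v0 = ereal (infsum (\<lambda>xs. pp D xs * real_of_int (pw G xs)) (Fp v0))"
          using res(1) unfolding exp_TP_def ppe pwe Fp_def by simp
        also have "\<dots> \<le> ereal (R + \<epsilon>)" using res(2) fin by simp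
        also have "\<dots> = Val_strat G (switching \<sigma>1 \<sigma>2 \<alpha>) v0 + ereal \<epsilon>" using R by (simp add: \<sigma>_def)
        finally show "exp_TP G (rho_p G \<sigma>1 \<sigma>2 p) \<tau> v0 \<le> Val_strat G (switching \<sigma>1 \<sigma>2 \<alpha>) v0 + ereal \<epsilon>" .
      qed
    qed
  qed
qed

theorem proposition10:
  fixes G :: "'v spgame" and \<sigma>1 \<sigma>2 :: "'v \<Rightarrow> 'v" and n :: nat and v0 :: 'v
  assumes "well_formed G"
    and "\<forall>v \<in> Vs G. Val_d G v \<noteq> \<infinity>"
    and "\<forall>v \<in> Vs G. Val_m_bar G v \<noteq> \<infinity>"
    and "NC_strategy G \<sigma>1" and "fake_optimal G \<sigma>1"
    and "attractor_strategy G \<sigma>2"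
    and "v0 \<in> Vs G"
  shows "\<exists>\<epsilon>0 > 0. \<forall>\<epsilon>. 0 < \<epsilon> \<and> \<epsilon> < \<epsilon>0 \<longrightarrow>
           (\<exists>p0 < 1. \<forall>p. p0 \<le> p \<and> p < 1 \<longrightarrow> 0 < p \<longrightarrow>
              (\<forall>\<tau>. ml_strat_Max G \<tau> \<longrightarrow>
                 exp_TP G (rho_p G \<sigma>1 \<sigma>2 p) \<tau> v0
                   \<le> Val_strat G (switching \<sigma>1 \<sigma>2
                         (nat ((2 * maxW G * (int (card (Vs G)) - 1) + int n) * int (card (Vs G)) + 1)))
                       v0 + ereal \<epsilon>))"
  by (rule main_bound[OF assms(1,4,5,6,7)])

end
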